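(* Let $(X,d)$ be a $\delta$-Gromov hyperbolic space, $p\in X$, $\epsilon>0$, and $X^\epsilon=(X,d_\epsilon)$ the uniformized space with base point $p$. If the Gehring-Hayman property for metric boundary points holds for $X^\epsilon$, then the canonical boundary map $\Phi:\partial_GX\to\partial_{d_\epsilon}X^\epsilon$ is bijective.
   Context: Gromov product $(x|y)_p=\frac12(d(p,x)+d(p,y)-d(x,y))$. $\delta$-Gromov hyperbolic: unbounded, proper, geodesic, and $(x|z)_p\ge\min\{(x|y)_p,(y|z)_p\}-\delta$ for all $x,y,z,p$. Uniformized metric: $d_\epsilon(x,y)=\inf_\gamma\int_\gamma e^{-\epsilon d(p,z)}ds(z)$ over $d$-rectifiable curves; $l_{d_\epsilon}$ is $d_\epsilon$-length; $\partial_{d_\epsilon}X^\epsilon=\overline{X^\epsilon}\setminus X^\epsilon$ (closure in the completion); $[x,y]$ a $d$-geodesic. $\partial_GX$ is the set of geodesic rays from $p$ modulo $\gamma\sim\tilde\gamma$ iff $\sup_t d(\gamma(t),\tilde\gamma(t))<\infty$; $\Phi([\gamma])=\lim_{k\to\infty}\gamma(k)$ in $d_\epsilon$ (well defined). GH property for metric boundary points: for every $x\in\partial_{d_\epsilon}X^\epsilon$ and every $(x_n)\subseteq X$ with $d_\epsilon(x_n,x)\to0$ there is $C\ge1$ with $l_{d_\epsilon}([x_n,x_m])\le Cd_\epsilon(x_n,x_m)$ for all $n,m$. *)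

theory Defs
  imports "HOL-Analysis.Analysis"
begin

text \<open>The space X is the whole carrier of a metric space type; d = dist.\<close>

definition gromov_prod :: "'a::metric_space \<Rightarrow> 'a \<Rightarrow> 'a \<Rightarrow> real" where
  "gromov_prod p x y = (dist p x + dist p y - dist x y) / 2"

definition geodesic_seg :: "(real \<Rightarrow> 'a::metric_space) \<Rightarrow> 'a \<Rightarrow> 'a \<Rightarrow> bool" where
  "geodesic_seg \<gamma> x y \<longleftrightarrow> \<gamma> 0 = x \<and> \<gamma> (dist x y) = y \<and>
     (\<forall>s\<in>{0..dist x y}. \<forall>t\<in>{0..dist x y}. dist (\<gamma> s) (\<gamma> t) = \<bar>s - t\<bar>)"

definition geodesic_space :: "'a::metric_space itself \<Rightarrow> bool" where
  "geodesic_space _ \<longleftrightarrow> (\<forall>x y::'a. \<exists>\<gamma>. geodesic_seg \<gamma> x y)"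

definition proper_space :: "'a::metric_space itself \<Rightarrow> bool" where
  "proper_space _ \<longleftrightarrow> (\<forall>(x::'a) r. compact (cball x r))"

definition gromov_hyperbolic :: "'a::metric_space itself \<Rightarrow> real \<Rightarrow> bool" where
  "gromov_hyperbolic T \<delta> \<longleftrightarrow> \<not> bounded (UNIV :: 'a set) \<and> proper_space T \<and> geodesic_space T \<and>
     (\<forall>x y z p :: 'a. gromov_prod p x z \<ge> min (gromov_prod p x y) (gromov_prod p y z) - \<delta>)"

definition length_wrt :: "('a \<Rightarrow> 'a \<Rightarrow> real) \<Rightarrow> (real \<Rightarrow> 'a) \<Rightarrow> real \<Rightarrow> real \<Rightarrow> ereal" where
  "length_wrt D \<gamma> a b = (SUP ts \<in> {ts. sorted ts \<and> set ts \<subseteq> {a..b}}.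
      ereal (\<Sum>i < length ts - 1. D (\<gamma> (ts ! i)) (\<gamma> (ts ! Suc i))))"

definition rectifiable_curve :: "(real \<Rightarrow> 'a::metric_space) \<Rightarrow> bool" where
  "rectifiable_curve \<gamma> \<longleftrightarrow> continuous_on {0..1} \<gamma> \<and> length_wrt dist \<gamma> 0 1 < \<infinity>"

definition arclen :: "(real \<Rightarrow> 'a::metric_space) \<Rightarrow> real \<Rightarrow> real" where
  "arclen \<gamma> t = real_of_ereal (length_wrt dist \<gamma> 0 t)"

definition arc_param :: "(real \<Rightarrow> 'a::metric_space) \<Rightarrow> real \<Rightarrow> 'a" where
  "arc_param \<gamma> s = \<gamma> (SOME t. t \<in> {0..1} \<and> arclen \<gamma> t = s)"

definition line_integral :: "('a::metric_space \<Rightarrow> real) \<Rightarrow> (real \<Rightarrow> 'a) \<Rightarrow> real" where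
  "line_integral \<rho> \<gamma> = integral {0..arclen \<gamma> 1} (\<lambda>s. \<rho> (arc_param \<gamma> s))"

definition unif_dist :: "real \<Rightarrow> 'a::metric_space \<Rightarrow> 'a \<Rightarrow> 'a \<Rightarrow> real" where
  "unif_dist \<epsilon> p x y = (INF \<gamma> \<in> {\<gamma>. rectifiable_curve \<gamma> \<and> \<gamma> 0 = x \<and> \<gamma> 1 = y}.
      line_integral (\<lambda>z. exp (- \<epsilon> * dist p z)) \<gamma>)"

definition geodesic_ray :: "'a::metric_space \<Rightarrow> (real \<Rightarrow> 'a) \<Rightarrow> bool" where
  "geodesic_ray p \<gamma> \<longleftrightarrow> \<gamma> 0 = p \<and> (\<forall>s\<ge>0. \<forall>t\<ge>0. dist (\<gamma> s) (\<gamma> t) = \<bar>s - t\<bar>)"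

definition ray_equiv :: "'a::metric_space \<Rightarrow> ((real \<Rightarrow> 'a) \<times> (real \<Rightarrow> 'a)) set" where
  "ray_equiv p = {(\<gamma>, \<gamma>'). geodesic_ray p \<gamma> \<and> geodesic_ray p \<gamma>' \<and>
      (\<exists>B. \<forall>t\<ge>0. dist (\<gamma> t) (\<gamma>' t) \<le> B)}"

definition gromov_boundary :: "'a::metric_space \<Rightarrow> (real \<Rightarrow> 'a) set set" where
  "gromov_boundary p = {\<gamma>. geodesic_ray p \<gamma>} // ray_equiv p"

text \<open>The metric boundary of X^eps: given an isometric embedding \<iota> of (X, d_eps) into a
  complete metric space (e.g. the completion), the closure of the image minus the image.\<close>
definition metric_boundary :: "('a \<Rightarrow> 'b::metric_space) \<Rightarrow> 'b set" where
  "metric_boundary \<iota> = closure (range \<iota>) - range \<iota>"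

definition Phi_map :: "('a \<Rightarrow> 'b::metric_space) \<Rightarrow> (real \<Rightarrow> 'a) set \<Rightarrow> 'b" where
  "Phi_map \<iota> C = lim (\<lambda>k::nat. \<iota> ((SOME \<gamma>. \<gamma> \<in> C) (real k)))"

definition GH_property :: "real \<Rightarrow> 'a::metric_space \<Rightarrow> ('a \<Rightarrow> 'b::metric_space) \<Rightarrow> bool" where
  "GH_property \<epsilon> p \<iota> \<longleftrightarrow> (\<forall>x \<in> metric_boundary \<iota>. \<forall>xs :: nat \<Rightarrow> 'a.
     (\<lambda>n. \<iota> (xs n)) \<longlonglongrightarrow> x \<longrightarrow>
     (\<exists>C\<ge>1. \<forall>n m. \<forall>\<gamma>. geodesic_seg \<gamma> (xs n) (xs m) \<longrightarrow>
        length_wrt (unif_dist \<epsilon> p) \<gamma> 0 (dist (xs n) (xs m)) \<le> ereal (C * unif_dist \<epsilon> p (xs n) (xs m))))"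

end

theory Submission
  imports Defs
begin


fun pl :: "('a \<Rightarrow> 'a \<Rightarrow> real) \<Rightarrow> (real \<Rightarrow> 'a) \<Rightarrow> real list \<Rightarrow> real" where
  "pl D g [] = 0"
| "pl D g [x] = 0"
| "pl D g (x # y # r) = D (g x) (g y) + pl D g (y # r)"

lemma pl_sum: "pl D g ts = (\<Sum>i < length ts - 1. D (g (ts ! i)) (g (ts ! Suc i)))"
proof (induction D g ts rule: pl.induct)
  case (3 D g x y r)
  have "(\<Sum>i < length (x # y # r) - 1. D (g ((x # y # r) ! i)) (g ((x # y # r) ! Suc i)))
      = (\<Sum>i < Suc (length (y # r) - 1). D (g ((x # y # r) ! i)) (g ((x # y # r) ! Suc i)))"
    by simp
  also have "\<dots> = D (g x) (g y) + (\<Sum>i < length (y # r) - 1. D (g ((y # r) ! i)) (g ((y # r) ! Suc i)))"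
    by (subst sum.lessThan_Suc_shift) simp
  finally show ?case using 3 by simp
qed auto

lemma length_wrt_pl: "length_wrt D g a b = (SUP ts \<in> {ts. sorted ts \<and> set ts \<subseteq> {a..b}}. ereal (pl D g ts))"
  unfolding length_wrt_def pl_sum ..

lemma pl_le_length: "sorted ts \<Longrightarrow> set ts \<subseteq> {a..b} \<Longrightarrow> ereal (pl D g ts) \<le> length_wrt D g a b"
  unfolding length_wrt_pl by (rule SUP_upper) auto

lemma length_wrt_ge_pair: "a \<le> u \<Longrightarrow> u \<le> v \<Longrightarrow> v \<le> b \<Longrightarrow> ereal (D (g u) (g v)) \<le> length_wrt D g a b"
  using pl_le_length[of "[u,v]" a b D g] by simp

lemma length_wrt_nonneg: "0 \<le> length_wrt D g a b"
  using pl_le_length[of "[]" a b D g] by (simp add: zero_ereal_def)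

lemma length_wrt_mono: "a' \<le> a \<Longrightarrow> b \<le> b' \<Longrightarrow> length_wrt D g a b \<le> length_wrt D g a' b'"
  unfolding length_wrt_pl by (rule SUP_subset_mono) auto

lemma pl_nonneg: "(\<And>x y. 0 \<le> D x y) \<Longrightarrow> 0 \<le> pl D g ts"
  by (induction D g ts rule: pl.induct) (auto intro: add_nonneg_nonneg)

lemma pl_append_ge:
  assumes "\<And>x y. 0 \<le> D x y"
  shows "pl D g xs + pl D g ys \<le> pl D g (xs @ ys)"
proof (induction xs rule: induct_list012)
  case (2 x)
  show ?case
  proof (cases ys)
    case (Cons y r) then show ?thesis using assms by simp
  qed simp
qed simp_all

lemma pl_split_le:
  shows "pl dist g (xs @ ys) \<le> pl dist g (xs @ [b]) + pl dist g (b # ys)"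
proof (induction xs rule: induct_list012)
  case 1
  show ?case
  proof (cases ys)
    case (Cons y r) then show ?thesis by simp
  qed simp
next
  case (2 x)
  show ?case
  proof (cases ys)
    case Nil then show ?thesis by simp
  next
    case (Cons y r) then show ?thesis using dist_triangle[of "g x" "g y" "g b"] by simp
  qed
next
  case (3 x y r) then show ?case by simp
qed

lemma pl_const: "(\<forall>u\<in>set ts. u = c) \<Longrightarrow> pl dist g ts = 0"
  by (induction ts rule: induct_list012) auto

lemma pl_map: "pl D g (map f ts) = pl D (g \<circ> f) ts"
  by (induction D "g \<circ> f" ts rule: pl.induct) auto

lemma pl_snoc: "pl D g (xs @ [y]) = pl D g xs + (if xs = [] then 0 else D (g (last xs)) (g y))"
  by (induction D g xs rule: pl.induct) auto

lemma pl_rev: "pl dist g (rev xs) = pl dist g xs"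
proof (induction xs rule: induct_list012)
  case (3 x y r)
  have "pl dist g (rev (x # y # r)) = pl dist g (rev (y # r) @ [x])" by simp
  also have "\<dots> = pl dist g (rev (y#r)) + dist (g y) (g x)"
    by (subst pl_snoc) (simp add: last_rev)
  finally show ?case using 3 by (simp add: dist_commute)
qed auto

definition Lr :: "(real \<Rightarrow> 'a::metric_space) \<Rightarrow> real \<Rightarrow> real \<Rightarrow> real" where
  "Lr g a b = real_of_ereal (length_wrt dist g a b)"

lemma Lr_ereal:
  assumes "length_wrt dist g a b < \<infinity>"
  shows "length_wrt dist g a b = ereal (Lr g a b)"
  using assms length_wrt_nonneg[of dist g a b] unfolding Lr_def
  by (cases "length_wrt dist g a b") auto

lemma Lr_upper:
  assumes "length_wrt dist g a b < \<infinity>" "sorted ts" "set ts \<subseteq> {a..b}"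
  shows "pl dist g ts \<le> Lr g a b"
  using pl_le_length[OF assms(2,3), of dist g] Lr_ereal[OF assms(1)] by simp

lemma Lr_least:
  assumes "length_wrt dist g a b < \<infinity>" "\<And>ts. sorted ts \<Longrightarrow> set ts \<subseteq> {a..b} \<Longrightarrow> pl dist g ts \<le> M"
  shows "Lr g a b \<le> M"
proof -
  have "length_wrt dist g a b \<le> ereal M"
    unfolding length_wrt_pl by (rule SUP_least) (use assms(2) in auto)
  then show ?thesis using Lr_ereal[OF assms(1)] by simp
qed

lemma Lr_nonneg: "0 \<le> Lr g a b"
  unfolding Lr_def using length_wrt_nonneg[of dist g a b] by (simp add: real_of_ereal_pos)

lemma length_fin_mono:
  "length_wrt dist g a' b' < \<infinity> \<Longrightarrow> a' \<le> a \<Longrightarrow> b \<le> b' \<Longrightarrow> length_wrt dist g a b < \<infinity>"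
  using length_wrt_mono[of a' a b b' dist g] order.strict_trans1 by blast

lemma Lr_pair:
  assumes "length_wrt dist g a b < \<infinity>" "a \<le> u" "u \<le> v" "v \<le> b"
  shows "dist (g u) (g v) \<le> Lr g a b"
  using Lr_upper[OF assms(1), of "[u,v]"] assms by simp

lemma Lr_superadd:
  assumes fin: "length_wrt dist g a c < \<infinity>" and "a \<le> b" "b \<le> c"
  shows "Lr g a b + Lr g b c \<le> Lr g a c"
proof -
  have fab: "length_wrt dist g a b < \<infinity>" and fbc: "length_wrt dist g b c < \<infinity>"
    using length_fin_mono[OF fin] assms by auto
  have key: "pl dist g xs + pl dist g ys \<le> Lr g a c"
    if "sorted xs" "set xs \<subseteq> {a..b}" "sorted ys" "set ys \<subseteq> {b..c}" for xs ys
  proof -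
    have "sorted (xs @ ys)" using that by (force simp: sorted_append subset_iff intro: order_trans)
    moreover have "set (xs @ ys) \<subseteq> {a..c}" using that assms by auto
    ultimately have "pl dist g (xs @ ys) \<le> Lr g a c" using Lr_upper[OF fin] by blast
    then show ?thesis using pl_append_ge[of dist g xs ys] by simp
  qed
  have "pl dist g ys \<le> Lr g a c - Lr g a b" if "sorted ys" "set ys \<subseteq> {b..c}" for ys
  proof -
    have "Lr g a b \<le> Lr g a c - pl dist g ys"
      by (rule Lr_least[OF fab]) (use key that in force)
    then show ?thesis by simp
  qed
  then have "Lr g b c \<le> Lr g a c - Lr g a b" by (rule Lr_least[OF fbc])
  then show ?thesis by simp
qed

lemma sorted_dropWhile_gt:
  "sorted ts \<Longrightarrow> u \<in> set (dropWhile (\<lambda>x. x \<le> b) ts) \<Longrightarrow> (b::real) < u"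
proof (induction ts)
  case (Cons x r)
  show ?case
  proof (cases "x \<le> b")
    case True then show ?thesis using Cons by simp
  next
    case False then show ?thesis using Cons by auto
  qed
qed simp

lemma Lr_subadd:
  assumes fin: "length_wrt dist g a c < \<infinity>" and "a \<le> b" "b \<le> c"
  shows "Lr g a c \<le> Lr g a b + Lr g b c"
proof (rule Lr_least[OF fin])
  fix ts :: "real list" assume ts: "sorted ts" "set ts \<subseteq> {a..c}"
  have fab: "length_wrt dist g a b < \<infinity>" and fbc: "length_wrt dist g b c < \<infinity>"
    using length_fin_mono[OF fin] assms by auto
  define xs where "xs = takeWhile (\<lambda>x. x \<le> b) ts"
  define ys where "ys = dropWhile (\<lambda>x. x \<le> b) ts"
  have ts_eq: "ts = xs @ ys" unfolding xs_def ys_def by simp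
  have sxs: "sorted (xs @ [b])"
    using ts unfolding xs_def
    by (auto simp: sorted_append dest: set_takeWhileD intro: sorted_takeWhile)
  have sys: "sorted (b # ys)"
    using ts sorted_dropWhile_gt[OF ts(1)] unfolding ys_def
    by (auto intro: sorted_dropWhile less_imp_le)
  have "set (xs @ [b]) \<subseteq> {a..b}" using ts assms unfolding xs_def by (force dest: set_takeWhileD)
  then have 1: "pl dist g (xs @ [b]) \<le> Lr g a b" using Lr_upper[OF fab sxs] by blast
  have "set (b # ys) \<subseteq> {b..c}"
  proof
    fix u assume "u \<in> set (b # ys)"
    then consider "u = b" | "u \<in> set ys" by auto
    then show "u \<in> {b..c}"
    proof cases
      case 2
      then have "b < u" using sorted_dropWhile_gt[OF ts(1)] unfolding ys_def by blast
      moreover have "u \<in> set ts" using 2 unfolding ys_def by (auto dest: set_dropWhileD)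
      ultimately show ?thesis using ts by auto
    qed (use assms in auto)
  qed
  then have 2: "pl dist g (b # ys) \<le> Lr g b c" using Lr_upper[OF fbc sys] by blast
  show "pl dist g ts \<le> Lr g a b + Lr g b c"
    using pl_split_le[of g xs ys b] 1 2 ts_eq by simp
qed

lemma Lr_add:
  assumes "length_wrt dist g a c < \<infinity>" "a \<le> b" "b \<le> c"
  shows "Lr g a c = Lr g a b + Lr g b c"
  using Lr_subadd[OF assms] Lr_superadd[OF assms] by simp



lemma pl_map_max_id: "\<forall>u\<in>set ts. t' \<le> u \<Longrightarrow> map (max t') ts = (ts::real list)"
  by (induction ts) auto

lemma pl_max_ge:
  fixes g :: "real \<Rightarrow> 'a::metric_space"
  assumes "sorted ts" "\<forall>u\<in>set ts. u = t0 \<or> t' \<le> u" "t0 \<le> t'"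
  shows "pl dist g ts - dist (g t0) (g t') \<le> pl dist g (map (max t') ts)"
  using assms
proof (induction ts rule: induct_list012)
  case 1 then show ?case by simp
next
  case (2 x) then show ?case by simp
next
  case (3 x y zs)
  show ?case
  proof (cases "t' \<le> x")
    case True
    then have "\<forall>u\<in>set (x # y # zs). t' \<le> u" using 3(3) by auto
    then have "map (max t') (x # y # zs) = x # y # zs" by (rule pl_map_max_id)
    then show ?thesis by simp
  next
    case False
    then have x: "x = t0" "x < t'" using 3(4) by auto
    show ?thesis
    proof (cases "t' \<le> y")
      case True
      then have "\<forall>u\<in>set (y # zs). t' \<le> u" using 3(3) by auto
      then have m: "map (max t') (y # zs) = y # zs" by (rule pl_map_max_id)
      have "max t' x = t'" "max t' y = y" using x True by auto
      then have "pl dist g (map (max t') (x # y # zs)) = dist (g t') (g y) + pl dist g (y # zs)"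
        using m by simp
      moreover have "dist (g t0) (g y) \<le> dist (g t0) (g t') + dist (g t') (g y)"
        by (rule dist_triangle)
      ultimately show ?thesis using x by simp
    next
      case False
      then have y: "y = t0" using 3(4) by auto
      have IH: "pl dist g (y # zs) - dist (g t0) (g t') \<le> pl dist g (map (max t') (y # zs))"
        using 3 by auto
      have "pl dist g (map (max t') (x # y # zs)) = pl dist g (map (max t') (y # zs))"
        using x y by simp
      then show ?thesis using IH x y by simp
    qed
  qed
qed

lemma Lr_refl: "length_wrt dist g a a < \<infinity> \<Longrightarrow> Lr g a a = 0"
  using Lr_superadd[of g a a a] Lr_nonneg[of g a a] by simp

lemma Lr_mono_right:
  "length_wrt dist g a c < \<infinity> \<Longrightarrow> a \<le> b \<Longrightarrow> b \<le> c \<Longrightarrow> Lr g a b \<le> Lr g a c"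
  using Lr_superadd[of g a c b] Lr_nonneg[of g b c] by simp

lemma Lr_mono_left:
  "length_wrt dist g a c < \<infinity> \<Longrightarrow> a \<le> b \<Longrightarrow> b \<le> c \<Longrightarrow> Lr g b c \<le> Lr g a c"
  using Lr_superadd[of g a c b] Lr_nonneg[of g a b] by simp

lemma Lr_right_small:
  fixes g :: "real \<Rightarrow> 'a::metric_space"
  assumes cont: "continuous_on {a..b} g" and fin: "length_wrt dist g a b < \<infinity>"
    and at0: "a \<le> t0" and t0b: "t0 < b" and e: "e > 0"
  shows "\<exists>t'. t0 < t' \<and> t' \<le> b \<and> Lr g t0 t' < e"
proof (rule ccontr)
  assume "\<not> ?thesis"
  then have H: "\<And>t'. t0 < t' \<Longrightarrow> t' \<le> b \<Longrightarrow> e \<le> Lr g t0 t'" by (auto simp: not_less)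
  obtain d where d: "d > 0" "\<And>u. u \<in> {a..b} \<Longrightarrow> dist u t0 < d \<Longrightarrow> dist (g u) (g t0) < e/4"
    using cont at0 t0b e unfolding continuous_on_iff
    by (metis atLeastAtMost_iff divide_pos_pos less_imp_le order_refl zero_less_numeral)
  have step: "\<forall>t. t0 < t \<and> t \<le> b \<longrightarrow> real k * (e/2) \<le> Lr g t0 t" for k :: nat
  proof (induction k)
    case 0 then show ?case by (simp add: Lr_nonneg)
  next
    case (Suc k)
    show ?case
    proof (intro allI impI)
      fix t1 assume t1: "t0 < t1 \<and> t1 \<le> b"
      have fin1: "length_wrt dist g t0 t1 < \<infinity>" using length_fin_mono[OF fin] at0 t1 by auto
      have "e \<le> Lr g t0 t1" using H t1 by auto
      then obtain ts where ts: "sorted ts" "set ts \<subseteq> {t0..t1}" "3*e/4 < pl dist g ts"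
        using Lr_least[OF fin1, of "3*e/4"] e by force
      define Pos where "Pos = {u \<in> set ts. t0 < u}"
      have Pne: "Pos \<noteq> {}"
      proof
        assume "Pos = {}"
        then have "\<forall>u\<in>set ts. u = t0" using ts unfolding Pos_def by force
        then have "pl dist g ts = 0" by (rule pl_const)
        with ts e show False by simp
      qed
      have finP: "finite Pos" unfolding Pos_def by simp
      define m where "m = Min Pos"
      have m: "t0 < m" "m \<le> t1" using Min_in[OF finP Pne] ts unfolding m_def Pos_def by auto
      have mle: "\<forall>u\<in>set ts. u = t0 \<or> m \<le> u"
      proof
        fix u assume u: "u \<in> set ts"
        show "u = t0 \<or> m \<le> u"
        proof (cases "t0 < u")
          case True then have "u \<in> Pos" using u unfolding Pos_def by simp
          then show ?thesis using Min_le[OF finP] unfolding m_def by blast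
        next
          case False then show ?thesis using u ts(2) by force
        qed
      qed
      define t' where "t' = min m (t0 + d/2)"
      have t': "t0 < t'" "t' \<le> t1" "t' \<le> m" using m d unfolding t'_def by auto
      have "dist (g t') (g t0) < e/4"
        using d(2)[of t'] t' t1 at0 d(1) unfolding t'_def by (auto simp: dist_real_def)
      then have dt': "dist (g t0) (g t') < e/4" by (simp add: dist_commute)
      have mle': "\<forall>u\<in>set ts. u = t0 \<or> t' \<le> u" using mle t' by force
      have 1: "pl dist g ts - dist (g t0) (g t') \<le> pl dist g (map (max t') ts)"
        by (rule pl_max_ge[OF ts(1) mle']) (use t' in auto)
      have fin2: "length_wrt dist g t' t1 < \<infinity>" using length_fin_mono[OF fin1] t' by auto
      have "sorted (map (max t') ts)" unfolding sorted_map
        by (rule sorted_wrt_mono_rel[OF _ ts(1)]) (auto simp: max_def)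
      moreover have "set (map (max t') ts) \<subseteq> {t'..t1}" using ts(2) t' by auto
      ultimately have 2: "pl dist g (map (max t') ts) \<le> Lr g t' t1" using Lr_upper[OF fin2] by blast
      have 3: "real k * (e/2) \<le> Lr g t0 t'" using Suc t' t1 by auto
      have 4: "Lr g t0 t' + Lr g t' t1 \<le> Lr g t0 t1" using Lr_superadd[OF fin1] t' by auto
      show "real (Suc k) * (e/2) \<le> Lr g t0 t1" using 1 2 3 4 ts(3) dt' by (simp add: algebra_simps)
    qed
  qed
  obtain k :: nat where "Lr g t0 b < real k * (e/2)"
    using reals_Archimedean3[of "e/2"] e by (metis half_gt_zero)
  with step[of k] t0b show False by auto
qed

lemma length_wrt_reverse:
  "length_wrt dist (\<lambda>t. g (- t)) (-b) (-a) = length_wrt dist g a b"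
proof -
  define h where "h = (\<lambda>ts::real list. rev (map uminus ts))"
  have hh: "h (h ts) = ts" for ts unfolding h_def by (simp add: rev_map)
  have sh: "sorted (h ts) \<longleftrightarrow> sorted ts" for ts
    unfolding h_def by (simp add: sorted_wrt_rev sorted_wrt_map)
  have seth: "set (h ts) \<subseteq> {-b..-a} \<longleftrightarrow> set ts \<subseteq> {a..b}" for ts
    unfolding h_def by auto
  have S: "{ts. sorted ts \<and> set ts \<subseteq> {-b..-a}} = h ` {ts. sorted ts \<and> set ts \<subseteq> {a..b}}"
  proof (rule set_eqI, rule iffI)
    fix ts assume "ts \<in> {ts. sorted ts \<and> set ts \<subseteq> {-b..-a}}"
    then show "ts \<in> h ` {ts. sorted ts \<and> set ts \<subseteq> {a..b}}"
      using sh[of "h ts"] seth[of "h ts"] hh[of ts] by (metis (mono_tags, lifting) image_eqI mem_Collect_eq)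
  qed (use sh seth in auto)
  have pl: "pl dist (\<lambda>t. g (- t)) (h ts) = pl dist g ts" for ts
    unfolding h_def pl_rev pl_map by (simp add: comp_def)
  show ?thesis
    unfolding length_wrt_pl S image_image pl ..
qed

lemma Lr_reverse: "Lr (\<lambda>t. g (- t)) (-b) (-a) = Lr g a b"
  unfolding Lr_def length_wrt_reverse ..

lemma Lr_left_small:
  fixes g :: "real \<Rightarrow> 'a::metric_space"
  assumes cont: "continuous_on {a..b} g" and fin: "length_wrt dist g a b < \<infinity>"
    and at0: "a < t0" and t0b: "t0 \<le> b" and e: "e > 0"
  shows "\<exists>t'. a \<le> t' \<and> t' < t0 \<and> Lr g t' t0 < e"
proof -
  have cont': "continuous_on {-b..-a} (\<lambda>t. g (- t))"
    by (rule continuous_on_compose2[OF cont]) (auto intro: continuous_intros)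
  have fin': "length_wrt dist (\<lambda>t. g (- t)) (-b) (-a) < \<infinity>" using fin length_wrt_reverse by metis
  obtain t'' where t'': "-t0 < t''" "t'' \<le> -a" "Lr (\<lambda>t. g (- t)) (-t0) t'' < e"
    using Lr_right_small[OF cont' fin', of "-t0" e] at0 t0b e by auto
  have "Lr (\<lambda>t. g (- t)) (-t0) t'' = Lr g (-t'') t0"
    using Lr_reverse[where g=g and a="-t''" and b=t0] by simp
  then show ?thesis using t'' by (intro exI[of _ "-t''"]) auto
qed

lemma rect_fin: "rectifiable_curve g \<Longrightarrow> 0 \<le> a \<Longrightarrow> b \<le> 1 \<Longrightarrow> length_wrt dist g a b < \<infinity>"
  unfolding rectifiable_curve_def using length_fin_mono by blast

lemma arclen_Lr: "arclen g t = Lr g 0 t"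
  unfolding arclen_def Lr_def ..

lemma arclen_cont:
  fixes g :: "real \<Rightarrow> 'a::metric_space"
  assumes rc: "rectifiable_curve g"
  shows "continuous_on {0..1} (arclen g)"
  unfolding continuous_on_iff
proof (intro ballI allI impI)
  fix t0 e :: real assume t0: "t0 \<in> {0..1}" and e: "0 < e"
  have cont: "continuous_on {0..1} g" and fin: "length_wrt dist g 0 1 < \<infinity>"
    using rc unfolding rectifiable_curve_def by auto
  obtain dR where dR: "dR > 0" "\<And>t. t0 \<le> t \<Longrightarrow> t < t0 + dR \<Longrightarrow> t \<le> 1 \<Longrightarrow> Lr g t0 t < e"
  proof (cases "t0 < 1")
    case True
    then obtain t' where t': "t0 < t'" "t' \<le> 1" "Lr g t0 t' < e"
      using Lr_right_small[OF cont fin, of t0 e] t0 e by auto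
    show ?thesis
    proof (rule that[of "t' - t0"])
      fix t assume "t0 \<le> t" "t < t0 + (t' - t0)" "t \<le> 1"
      then have "Lr g t0 t \<le> Lr g t0 t'"
        using Lr_mono_right[OF rect_fin[OF rc], of t0 t' t] t0 t' by auto
      then show "Lr g t0 t < e" using t' by simp
    qed (use t' in auto)
  next
    case False
    show ?thesis
    proof (rule that[of 1])
      fix t assume "t0 \<le> t" "t < t0 + 1" "t \<le> 1"
      then have "t = t0" using False by auto
      then show "Lr g t0 t < e" using Lr_refl[OF rect_fin[OF rc]] t0 e by auto
    qed simp
  qed
  obtain dL where dL: "dL > 0" "\<And>t. t \<le> t0 \<Longrightarrow> t0 - dL < t \<Longrightarrow> 0 \<le> t \<Longrightarrow> Lr g t t0 < e"
  proof (cases "0 < t0")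
    case True
    then obtain t' where t': "0 \<le> t'" "t' < t0" "Lr g t' t0 < e"
      using Lr_left_small[OF cont fin, of t0 e] t0 e by auto
    show ?thesis
    proof (rule that[of "t0 - t'"])
      fix t assume "t \<le> t0" "t0 - (t0 - t') < t" "0 \<le> t"
      then have "Lr g t t0 \<le> Lr g t' t0"
        using Lr_mono_left[OF rect_fin[OF rc], of t' t0 t] t0 t' by auto
      then show "Lr g t t0 < e" using t' by simp
    qed (use t' in auto)
  next
    case False
    show ?thesis
    proof (rule that[of 1])
      fix t assume "t \<le> t0" "t0 - 1 < t" "0 \<le> t"
      then have "t = t0" using False t0 by auto
      then show "Lr g t t0 < e" using Lr_refl[OF rect_fin[OF rc]] t0 e by auto
    qed simp
  qed
  show "\<exists>d>0. \<forall>t\<in>{0..1}. dist t t0 < d \<longrightarrow> dist (arclen g t) (arclen g t0) < e"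
  proof (intro exI[of _ "min dR dL"] conjI ballI impI)
    fix t assume t: "t \<in> {0..1}" "dist t t0 < min dR dL"
    show "dist (arclen g t) (arclen g t0) < e"
    proof (cases "t0 \<le> t")
      case True
      have "arclen g t = arclen g t0 + Lr g t0 t"
        unfolding arclen_Lr using Lr_add[OF rect_fin[OF rc], where a=0 and b=t0 and c=t] t0 t True by auto
      moreover have "Lr g t0 t < e" using dR(2)[of t] t True by (auto simp: dist_real_def)
      ultimately show ?thesis using Lr_nonneg[of g t0 t] by (simp add: dist_real_def)
    next
      case False
      have "arclen g t0 = arclen g t + Lr g t t0"
        unfolding arclen_Lr using Lr_add[OF rect_fin[OF rc], where a=0 and b=t and c=t0] t0 t False by auto
      moreover have "Lr g t t0 < e" using dL(2)[of t] t False by (auto simp: dist_real_def)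
      ultimately show ?thesis using Lr_nonneg[of g t t0] by (simp add: dist_real_def)
    qed
  qed (use dR dL in auto)
qed

lemma arclen_IVT:
  fixes g :: "real \<Rightarrow> 'a::metric_space"
  assumes rc: "rectifiable_curve g" and s: "0 \<le> s" "s \<le> arclen g 1"
  shows "\<exists>t. 0 \<le> t \<and> t \<le> 1 \<and> arclen g t = s"
proof -
  have "arclen g 0 = 0" unfolding arclen_Lr using Lr_refl[OF rect_fin[OF rc]] by simp
  then show ?thesis using IVT'[of "arclen g" 0 s 1] s arclen_cont[OF rc] by auto
qed



lemma dist_le_arclen:
  fixes g :: "real \<Rightarrow> 'a::metric_space"
  assumes rc: "rectifiable_curve g" and t: "0 \<le> t1" "t1 \<le> 1" "0 \<le> t2" "t2 \<le> 1"
  shows "dist (g t1) (g t2) \<le> \<bar>arclen g t1 - arclen g t2\<bar>"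
proof -
  have *: "dist (g u) (g v) \<le> arclen g v - arclen g u" if "0 \<le> u" "u \<le> v" "v \<le> 1" for u v
  proof -
    have "arclen g v = arclen g u + Lr g u v"
      unfolding arclen_Lr using Lr_add[OF rect_fin[OF rc], where a=0 and b=u and c=v] that by auto
    moreover have "dist (g u) (g v) \<le> Lr g u v"
      using Lr_pair[OF rect_fin[OF rc], of u v u v] that by auto
    ultimately show ?thesis by simp
  qed
  show ?thesis
  proof (cases "t1 \<le> t2")
    case True then show ?thesis using *[of t1 t2] t by auto
  next
    case False then show ?thesis using *[of t2 t1] t by (auto simp: dist_commute)
  qed
qed

lemma arc_param_prop:
  fixes g :: "real \<Rightarrow> 'a::metric_space"
  assumes rc: "rectifiable_curve g" and s: "0 \<le> s" "s \<le> arclen g 1"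
  shows "\<exists>t. 0 \<le> t \<and> t \<le> 1 \<and> arclen g t = s \<and> arc_param g s = g t"
proof -
  have ex: "\<exists>t. t \<in> {0..1} \<and> arclen g t = s" using arclen_IVT[OF rc s] by auto
  define t where "t = (SOME t. t \<in> {0..1} \<and> arclen g t = s)"
  have "t \<in> {0..1} \<and> arclen g t = s" unfolding t_def by (rule someI_ex[OF ex])
  moreover have "arc_param g s = g t" unfolding arc_param_def t_def ..
  ultimately show ?thesis by auto
qed

lemma arclen_nonneg: "0 \<le> arclen g t"
  unfolding arclen_Lr by (rule Lr_nonneg)

lemma arc_param_lip:
  fixes g :: "real \<Rightarrow> 'a::metric_space"
  assumes rc: "rectifiable_curve g" and s: "s1 \<in> {0..arclen g 1}" "s2 \<in> {0..arclen g 1}"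
  shows "dist (arc_param g s1) (arc_param g s2) \<le> \<bar>s1 - s2\<bar>"
proof -
  obtain t1 where t1: "0 \<le> t1" "t1 \<le> 1" "arclen g t1 = s1" "arc_param g s1 = g t1"
    using arc_param_prop[OF rc, of s1] s by auto
  obtain t2 where t2: "0 \<le> t2" "t2 \<le> 1" "arclen g t2 = s2" "arc_param g s2 = g t2"
    using arc_param_prop[OF rc, of s2] s by auto
  show ?thesis using dist_le_arclen[OF rc t1(1,2) t2(1,2)] t1 t2 by simp
qed

lemma arc_param_start:
  fixes g :: "real \<Rightarrow> 'a::metric_space"
  assumes rc: "rectifiable_curve g" and s: "s \<in> {0..arclen g 1}"
  shows "dist (g 0) (arc_param g s) \<le> s"
proof -
  obtain t1 where t1: "0 \<le> t1" "t1 \<le> 1" "arclen g t1 = s" "arc_param g s = g t1"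
    using arc_param_prop[OF rc, of s] s by auto
  have "arclen g 0 = 0" unfolding arclen_Lr using Lr_refl[OF rect_fin[OF rc]] by simp
  then show ?thesis using dist_le_arclen[OF rc _ _ t1(1,2), of 0] t1 s by auto
qed

lemma arc_param_cont:
  fixes g :: "real \<Rightarrow> 'a::metric_space"
  assumes rc: "rectifiable_curve g"
  shows "continuous_on {0..arclen g 1} (arc_param g)"
  unfolding continuous_on_iff
proof (intro ballI allI impI)
  fix x e :: real assume x: "x \<in> {0..arclen g 1}" and e: "0 < e"
  show "\<exists>d>0. \<forall>x'\<in>{0..arclen g 1}. dist x' x < d \<longrightarrow> dist (arc_param g x') (arc_param g x) < e"
    using arc_param_lip[OF rc _ x] e by (intro exI[of _ e]) (force simp: dist_real_def)
qed

lemma arclen_ge_dist: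
  fixes g :: "real \<Rightarrow> 'a::metric_space"
  assumes rc: "rectifiable_curve g"
  shows "dist (g 0) (g 1) \<le> arclen g 1"
proof -
  have "arclen g 0 = 0" unfolding arclen_Lr using Lr_refl[OF rect_fin[OF rc]] by simp
  then show ?thesis using dist_le_arclen[OF rc, of 0 1] arclen_nonneg[of g 1] by simp
qed

lemma line_integral_nonneg:
  assumes "\<And>z. 0 \<le> \<rho> z"
  shows "0 \<le> line_integral \<rho> g"
  unfolding line_integral_def
proof (cases "(\<lambda>s. \<rho> (arc_param g s)) integrable_on {0..arclen g 1}")
  case True then show "0 \<le> integral {0..arclen g 1} (\<lambda>s. \<rho> (arc_param g s))"
    using assms by (intro integral_nonneg) auto
qed (simp add: not_integrable_integral)

lemma line_integral_lower:
  fixes g :: "real \<Rightarrow> 'a::metric_space"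
  assumes rc: "rectifiable_curve g" and eps: "0 \<le> \<epsilon>" and r: "0 < r"
  shows "exp (-\<epsilon> * (dist p (g 0) + r)) * min r (dist (g 0) (g 1))
           \<le> line_integral (\<lambda>z. exp (- \<epsilon> * dist p z)) g"
proof -
  define L where "L = arclen g 1"
  define f where "f = (\<lambda>s. exp (- \<epsilon> * dist p (arc_param g s)))"
  define c where "c = exp (-\<epsilon> * (dist p (g 0) + r))"
  define m where "m = min r L"
  have L0: "0 \<le> L" unfolding L_def by (rule arclen_nonneg)
  have cont: "continuous_on {0..L} f"
    unfolding f_def L_def by (intro continuous_intros arc_param_cont[OF rc])
  have int: "f integrable_on {0..L}" by (rule integrable_continuous_interval[OF cont])
  have m: "0 \<le> m" "m \<le> L" unfolding m_def using L0 r by auto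
  have split: "integral {0..m} f + integral {m..L} f = integral {0..L} f"
    by (rule Henstock_Kurzweil_Integration.integral_combine[OF m int])
  have int1: "f integrable_on {0..m}" by (rule integrable_on_subinterval[OF int]) (use m in auto)
  have int2: "f integrable_on {m..L}" by (rule integrable_on_subinterval[OF int]) (use m in auto)
  have "integral {m..L} f \<ge> 0" by (rule integral_nonneg[OF int2]) (simp add: f_def)
  moreover have "integral {0..m} f \<ge> integral {0..m} (\<lambda>_. c)"
  proof (rule integral_le[OF _ int1])
    fix s assume s: "s \<in> {0..m}"
    then have "s \<in> {0..L}" using m by auto
    then have "dist (g 0) (arc_param g s) \<le> s" using arc_param_start[OF rc] unfolding L_def by blast
    then have "dist p (arc_param g s) \<le> dist p (g 0) + r"
      using dist_triangle[of p "arc_param g s" "g 0"] s m_def by auto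
    then show "c \<le> f s" unfolding c_def f_def using eps
      by (simp add: mult_left_mono)
  qed (rule integrable_const_ivl)
  moreover have "integral {0..m} (\<lambda>_. c) = m * c" using m by simp
  moreover have "min r (dist (g 0) (g 1)) \<le> m" unfolding m_def L_def using arclen_ge_dist[OF rc] by auto
  moreover have "c \<ge> 0" unfolding c_def by simp
  ultimately have "c * min r (dist (g 0) (g 1)) \<le> integral {0..L} f"
    using split by (smt (verit, best) mult.commute mult_left_mono)
  then show ?thesis unfolding c_def line_integral_def L_def f_def by simp
qed

lemma geodesic_dist:
  "geodesic_seg g x y \<Longrightarrow> s \<in> {0..dist x y} \<Longrightarrow> t \<in> {0..dist x y} \<Longrightarrow> dist (g s) (g t) = \<bar>s - t\<bar>"
  unfolding geodesic_seg_def by blast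

lemma geodesic_cont:
  assumes "geodesic_seg g x y"
  shows "continuous_on {0..dist x y} g"
  unfolding continuous_on_iff
proof (intro ballI allI impI)
  fix s e :: real assume s: "s \<in> {0..dist x y}" and e: "0 < e"
  show "\<exists>d>0. \<forall>x'\<in>{0..dist x y}. dist x' s < d \<longrightarrow> dist (g x') (g s) < e"
    using geodesic_dist[OF assms _ s] e by (intro exI[of _ e]) (auto simp: dist_real_def)
qed

lemma geo_curve:
  fixes g :: "real \<Rightarrow> 'a::metric_space"
  assumes geo: "geodesic_seg g x y"
  defines "c \<equiv> (\<lambda>t. g (dist x y * t))"
  shows "rectifiable_curve c" "c 0 = x" "c 1 = y"
    "line_integral \<rho> c = integral {0..dist x y} (\<lambda>s. \<rho> (g s))"
proof -
  define D where "D = dist x y"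
  have D0: "0 \<le> D" unfolding D_def by simp
  have cd: "dist (c s) (c t) = D * \<bar>s - t\<bar>" if "s \<in> {0..1}" "t \<in> {0..1}" for s t
  proof -
    have "D * s \<in> {0..D}" "D * t \<in> {0..D}" using that D0 by (auto simp: mult_left_le)
    then have "dist (c s) (c t) = \<bar>D * s - D * t\<bar>" unfolding c_def D_def using geodesic_dist[OF geo] D_def by auto
    also have "\<dots> = D * \<bar>s - t\<bar>" using D0 by (simp add: abs_mult right_diff_distrib[symmetric])
    finally show ?thesis .
  qed
  have pl: "pl dist c ts = D * (last ts - hd ts)" if "sorted ts" "set ts \<subseteq> {0..1}" "ts \<noteq> []" for ts
    using that
  proof (induction ts rule: induct_list012)
    case (3 x y zs)
    have "dist (c x) (c y) = D * (y - x)" using cd[of x y] 3(3,4) by auto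
    then show ?case using 3 by (simp add: algebra_simps)
  qed auto
  have len: "length_wrt dist c 0 t = ereal (D * t)" if t: "0 \<le> t" "t \<le> 1" for t
  proof (rule antisym)
    show "length_wrt dist c 0 t \<le> ereal (D * t)"
      unfolding length_wrt_pl
    proof (rule SUP_least)
      fix ts assume ts: "ts \<in> {ts. sorted ts \<and> set ts \<subseteq> {0..t}}"
      show "ereal (pl dist c ts) \<le> ereal (D * t)"
      proof (cases "ts = []")
        case True then show ?thesis using D0 t by simp
      next
        case False
        then have "last ts \<in> set ts" "hd ts \<in> set ts" by auto
        then have "last ts \<in> {0..t}" "hd ts \<in> {0..t}" using ts by auto
        then have "last ts - hd ts \<le> t" by auto
        moreover have "set ts \<subseteq> {0..1}" using ts t by auto
        ultimately show ?thesis using pl[of ts] ts t False D0 by (auto intro: mult_left_mono)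
      qed
    qed
    show "ereal (D * t) \<le> length_wrt dist c 0 t"
      using length_wrt_ge_pair[of 0 0 t t dist c] cd[of 0 t] t D0 by simp
  qed
  have "continuous_on {0..1} c"
    unfolding continuous_on_iff
  proof (intro ballI allI impI)
    fix s e :: real assume s: "s \<in> {0..1}" and e: "0 < e"
    show "\<exists>d>0. \<forall>x'\<in>{0..1}. dist x' s < d \<longrightarrow> dist (c x') (c s) < e"
    proof (intro exI[of _ "e / (D + 1)"] conjI ballI impI)
      fix t assume t: "t \<in> {0..1}" "dist t s < e / (D + 1)"
      have "dist (c t) (c s) = D * \<bar>t - s\<bar>" using cd t s by auto
      also have "\<dots> \<le> (D + 1) * \<bar>t - s\<bar>" using D0 by (simp add: mult_right_mono)
      also have "\<dots> < e" using t D0 by (simp add: dist_real_def field_simps)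
      finally show "dist (c t) (c s) < e" .
    qed (use e D0 in auto)
  qed
  then show rc: "rectifiable_curve c"
    unfolding rectifiable_curve_def using len[of 1] by simp
  show "c 0 = x" using geo unfolding c_def geodesic_seg_def by simp
  show "c 1 = y" using geo unfolding c_def geodesic_seg_def by simp
  have al: "arclen c t = D * t" if "0 \<le> t" "t \<le> 1" for t
    unfolding arclen_def using len[OF that] by simp
  have ap: "arc_param c s = g s" if s: "s \<in> {0..D}" for s
  proof -
    obtain t where t: "0 \<le> t" "t \<le> 1" "arclen c t = s" "arc_param c s = c t"
      using arc_param_prop[OF rc, of s] s al[of 1] by auto
    then have "D * t = s" using al by simp
    then show ?thesis using t unfolding c_def D_def by simp
  qed
  show "line_integral \<rho> c = integral {0..dist x y} (\<lambda>s. \<rho> (g s))"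
    unfolding line_integral_def al[of 1, simplified] D_def[symmetric]
    by (rule integral_cong) (simp add: ap)
qed



lemma ud_upper_geo:
  fixes x y p :: "'a::metric_space"
  assumes geo: "geodesic_seg g x y"
  shows "unif_dist \<epsilon> p x y \<le> integral {0..dist x y} (\<lambda>s. exp (- \<epsilon> * dist p (g s)))"
  unfolding unif_dist_def
proof (rule cINF_lower2)
  show "bdd_below ((\<lambda>\<gamma>. line_integral (\<lambda>z. exp (- \<epsilon> * dist p z)) \<gamma>) `
      {\<gamma>. rectifiable_curve \<gamma> \<and> \<gamma> 0 = x \<and> \<gamma> 1 = y})"
    by (rule bdd_belowI[of _ 0]) (auto intro: line_integral_nonneg)
  show "(\<lambda>t. g (dist x y * t)) \<in> {\<gamma>. rectifiable_curve \<gamma> \<and> \<gamma> 0 = x \<and> \<gamma> 1 = y}"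
    using geo_curve[OF geo] by auto
  show "line_integral (\<lambda>z. exp (- \<epsilon> * dist p z)) (\<lambda>t. g (dist x y * t))
      \<le> integral {0..dist x y} (\<lambda>s. exp (- \<epsilon> * dist p (g s)))"
    using geo_curve(4)[OF geo] by simp
qed

lemma ud_lower:
  fixes x y p :: "'a::metric_space"
  assumes gs: "geodesic_space TYPE('a)" and eps: "0 \<le> \<epsilon>" and r: "0 < r"
  shows "exp (-\<epsilon> * (dist p x + r)) * min r (dist x y) \<le> unif_dist \<epsilon> p x y"
  unfolding unif_dist_def
proof (rule cINF_greatest)
  obtain g where "geodesic_seg g x y" using gs unfolding geodesic_space_def by blast
  then show "{\<gamma>. rectifiable_curve \<gamma> \<and> \<gamma> 0 = x \<and> \<gamma> 1 = y} \<noteq> {}"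
    using geo_curve by blast
  fix \<gamma> assume "\<gamma> \<in> {\<gamma>. rectifiable_curve \<gamma> \<and> \<gamma> 0 = x \<and> \<gamma> 1 = y}"
  then show "exp (-\<epsilon> * (dist p x + r)) * min r (dist x y) \<le> line_integral (\<lambda>z. exp (- \<epsilon> * dist p z)) \<gamma>"
    using line_integral_lower[of \<gamma> \<epsilon> r p] eps r by auto
qed

lemma ud_nonneg:
  fixes x y p :: "'a::metric_space"
  assumes gs: "geodesic_space TYPE('a)"
  shows "0 \<le> unif_dist \<epsilon> p x y"
  unfolding unif_dist_def
proof (rule cINF_greatest)
  obtain g where "geodesic_seg g x y" using gs unfolding geodesic_space_def by blast
  then show "{\<gamma>. rectifiable_curve \<gamma> \<and> \<gamma> 0 = x \<and> \<gamma> 1 = y} \<noteq> {}"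
    using geo_curve by blast
qed (auto intro: line_integral_nonneg)

lemma ud_upper1:
  fixes x y p :: "'a::metric_space"
  assumes geo: "geodesic_seg g x y" and eps: "0 \<le> \<epsilon>"
  shows "unif_dist \<epsilon> p x y \<le> dist x y * exp (- \<epsilon> * (dist p x - dist x y))"
proof -
  define D where "D = dist x y"
  have int: "(\<lambda>s. exp (- \<epsilon> * dist p (g s))) integrable_on {0..D}"
    unfolding D_def by (intro integrable_continuous_interval continuous_intros geodesic_cont[OF geo])
  have "integral {0..D} (\<lambda>s. exp (- \<epsilon> * dist p (g s))) \<le> integral {0..D} (\<lambda>s. exp (- \<epsilon> * (dist p x - D)))"
  proof (rule integral_le[OF int integrable_const_ivl])
    fix s assume s: "s \<in> {0..D}"
    have "dist x (g s) = s"
      using geodesic_dist[OF geo, of 0 s] s geo unfolding D_def geodesic_seg_def by auto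
    then have "dist p x - D \<le> dist p (g s)" using dist_triangle[of p x "g s"] s by (auto simp: dist_commute)
    then show "exp (- \<epsilon> * dist p (g s)) \<le> exp (- \<epsilon> * (dist p x - D))"
      using eps by (simp add: mult_left_mono)
  qed
  also have "\<dots> = D * exp (- \<epsilon> * (dist p x - D))" unfolding D_def by simp
  finally show ?thesis using ud_upper_geo[OF geo, of \<epsilon> p] unfolding D_def by simp
qed

lemma integral_exp_tail:
  fixes \<epsilon> a D :: real
  assumes eps: "0 < \<epsilon>" and D: "0 \<le> D"
  shows "integral {0..D} (\<lambda>s. exp (- \<epsilon> * (a + s))) \<le> exp (- \<epsilon> * a) / \<epsilon>"
proof -
  define F where "F = (\<lambda>s. - exp (- \<epsilon> * (a + s)) / \<epsilon>)"
  have "((\<lambda>s. exp (- \<epsilon> * (a + s))) has_integral F D - F 0) {0..D}"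
  proof (rule fundamental_theorem_of_calculus[OF D])
    fix s assume "s \<in> {0..D}"
    have "(F has_real_derivative exp (- \<epsilon> * (a + s))) (at s within {0..D})"
      unfolding F_def using eps
      by (auto intro!: derivative_eq_intros simp: field_simps)
    then show "(F has_vector_derivative exp (- \<epsilon> * (a + s))) (at s within {0..D})"
      by (simp add: has_real_derivative_iff_has_vector_derivative)
  qed
  then have "integral {0..D} (\<lambda>s. exp (- \<epsilon> * (a + s))) = F D - F 0" by (rule integral_unique)
  also have "\<dots> \<le> exp (- \<epsilon> * a) / \<epsilon>" unfolding F_def using eps by (simp add: divide_simps)
  finally show ?thesis .
qed

lemma ud_upper_tail:
  fixes x y p :: "'a::metric_space"
  assumes geo: "geodesic_seg g x y" and eps: "0 < \<epsilon>"
    and dp: "\<And>s. s \<in> {0..dist x y} \<Longrightarrow> dist p (g s) = a + s"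
  shows "unif_dist \<epsilon> p x y \<le> exp (- \<epsilon> * a) / \<epsilon>"
proof -
  have "integral {0..dist x y} (\<lambda>s. exp (- \<epsilon> * dist p (g s))) = integral {0..dist x y} (\<lambda>s. exp (- \<epsilon> * (a + s)))"
    by (rule integral_cong) (simp add: dp)
  then show ?thesis using ud_upper_geo[OF geo, of \<epsilon> p] integral_exp_tail[OF eps, of "dist x y" a] by simp
qed



lemma ray_dist: "geodesic_ray p \<gamma> \<Longrightarrow> 0 \<le> s \<Longrightarrow> 0 \<le> t \<Longrightarrow> dist (\<gamma> s) (\<gamma> t) = \<bar>s - t\<bar>"
  unfolding geodesic_ray_def by blast

lemma ray_p: "geodesic_ray p \<gamma> \<Longrightarrow> 0 \<le> s \<Longrightarrow> dist p (\<gamma> s) = s"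
  using ray_dist[of p \<gamma> 0 s] unfolding geodesic_ray_def by auto

lemma ray_geo: "geodesic_ray p \<gamma> \<Longrightarrow> 0 \<le> b \<Longrightarrow> geodesic_seg \<gamma> p (\<gamma> b)"
  unfolding geodesic_seg_def using ray_p[of p \<gamma> b] ray_dist[of p \<gamma>]
  by (auto simp: geodesic_ray_def)

lemma geo_sub:
  assumes geo: "geodesic_seg g x y" and ab: "0 \<le> a" "a \<le> b" "b \<le> dist x y"
  shows "geodesic_seg (\<lambda>s. g (a + s)) (g a) (g b)"
proof -
  have d: "dist (g a) (g b) = b - a" using geodesic_dist[OF geo, of a b] ab by auto
  show ?thesis unfolding geodesic_seg_def d
    using geodesic_dist[OF geo] ab by auto
qed

lemma geo_from_p: "geodesic_seg g p y \<Longrightarrow> s \<in> {0..dist p y} \<Longrightarrow> dist p (g s) = s"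
  using geodesic_dist[of g p y 0 s] unfolding geodesic_seg_def by auto

lemma cluster_frequently:
  fixes f :: "nat \<Rightarrow> 'a::topological_space"
  assumes K: "compact K" and fr: "frequently (\<lambda>n. f n \<in> K) sequentially"
  shows "\<exists>y\<in>K. \<forall>U. open U \<longrightarrow> y \<in> U \<longrightarrow> frequently (\<lambda>n. f n \<in> U) sequentially"
proof -
  define F where "F = inf (filtermap f sequentially) (principal K)"
  have "F \<noteq> bot"
  proof
    assume "F = bot"
    then have "eventually (\<lambda>x. False) F" by simp
    then have "eventually (\<lambda>n. f n \<in> K \<longrightarrow> False) sequentially"
      unfolding F_def eventually_inf_principal eventually_filtermap .
    then show False using fr unfolding frequently_def by simp
  qed
  moreover have "eventually (\<lambda>x. x \<in> K) F" unfolding F_def eventually_inf_principal by simp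
  ultimately obtain y where y: "y \<in> K" "inf (nhds y) F \<noteq> bot"
    using K unfolding compact_filter by blast
  show ?thesis
  proof (intro bexI[OF _ y(1)] allI impI)
    fix U assume U: "open U" "y \<in> U"
    show "frequently (\<lambda>n. f n \<in> U) sequentially"
    proof (rule ccontr)
      assume "\<not> ?thesis"
      then have "eventually (\<lambda>n. f n \<notin> U) sequentially" unfolding frequently_def by simp
      then have e1: "eventually (\<lambda>x. x \<notin> U) F"
        unfolding F_def eventually_inf_principal eventually_filtermap by (auto elim: eventually_mono)
      have e2: "eventually (\<lambda>x. x \<in> U) (nhds y)" using U by (rule eventually_nhds_in_open)
      have "eventually (\<lambda>x. False) (inf (nhds y) F)"
        unfolding eventually_inf using e1 e2 by blast
      then show False using y(2) by simp
    qed
  qed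
qed

lemma open_coord: "open {f :: real \<Rightarrow> 'a::metric_space. dist (f s) c < e}"
  by (rule open_Collect_less) (intro continuous_intros continuous_on_compose2[OF _ continuous_on_product_coordinates[of s]], auto)

lemma exp_seq_zero: "0 < \<epsilon> \<Longrightarrow> (\<lambda>k::nat. exp (- \<epsilon> * real k)) \<longlonglongrightarrow> 0"
proof -
  assume e: "0 < \<epsilon>"
  have "(\<lambda>k::nat. exp (- \<epsilon>) ^ k) \<longlonglongrightarrow> 0" by (rule LIMSEQ_power_zero) (use e in simp)
  moreover have "exp (- \<epsilon> * real k) = exp (- \<epsilon>) ^ k" for k :: nat
    using exp_of_nat_mult[of k "-\<epsilon>"] by (simp add: mult.commute)
  ultimately show ?thesis by simp
qed



locale unif_setting =
  fixes p :: "'a::metric_space" and \<delta> \<epsilon> :: real and \<iota> :: "'a \<Rightarrow> 'b::complete_space"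
  assumes hyp: "gromov_hyperbolic TYPE('a) \<delta>" and eps: "\<epsilon> > 0"
    and iso: "\<forall>x y. dist (\<iota> x) (\<iota> y) = unif_dist \<epsilon> p x y"
begin

lemma gs: "geodesic_space TYPE('a)"
  using hyp unfolding gromov_hyperbolic_def by blast

lemma proper: "compact (cball (x::'a) r)"
  using hyp unfolding gromov_hyperbolic_def proper_space_def by blast

lemma hyp4: "gromov_prod (q::'a) x z \<ge> min (gromov_prod q x y) (gromov_prod q y z) - \<delta>"
  using hyp unfolding gromov_hyperbolic_def by blast

lemma delta_nonneg: "0 \<le> \<delta>"
  using hyp4[of p p p p] by (simp add: gromov_prod_def)

lemma geo_ex: "\<exists>g. geodesic_seg g (x::'a) y"
  using gs unfolding geodesic_space_def by blast

lemma di: "dist (\<iota> x) (\<iota> y) = unif_dist \<epsilon> p x y"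
  using iso by blast

lemma di_upper1: "dist (\<iota> x) (\<iota> y) \<le> dist x y * exp (- \<epsilon> * (dist p x - dist x y))"
proof -
  obtain g where "geodesic_seg g x y" using geo_ex by blast
  then show ?thesis using ud_upper1[of g x y \<epsilon> p] eps di by simp
qed

lemma di_lower: "0 < r \<Longrightarrow> exp (-\<epsilon> * (dist p x + r)) * min r (dist x y) \<le> dist (\<iota> x) (\<iota> y)"
  using ud_lower[OF gs, of \<epsilon> r p x y] eps di by simp

lemma di_tail:
  assumes geo: "geodesic_seg g p y" and ab: "0 \<le> a" "a \<le> b" "b \<le> dist p y"
  shows "dist (\<iota> (g a)) (\<iota> (g b)) \<le> exp (- \<epsilon> * a) / \<epsilon>"
proof -
  have g2: "geodesic_seg (\<lambda>s. g (a + s)) (g a) (g b)" by (rule geo_sub[OF geo ab])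
  have d: "dist (g a) (g b) = b - a" using geodesic_dist[OF geo, of a b] ab by auto
  have "unif_dist \<epsilon> p (g a) (g b) \<le> exp (- \<epsilon> * a) / \<epsilon>"
  proof (rule ud_upper_tail[OF g2 eps])
    fix s assume "s \<in> {0..dist (g a) (g b)}"
    then show "dist p (g (a + s)) = a + s" using geo_from_p[OF geo, of "a + s"] d ab by auto
  qed
  then show ?thesis using di by simp
qed

lemma ray_tail:
  assumes r: "geodesic_ray p \<gamma>" and ab: "0 \<le> a" "a \<le> b"
  shows "dist (\<iota> (\<gamma> a)) (\<iota> (\<gamma> b)) \<le> exp (- \<epsilon> * a) / \<epsilon>"
  using di_tail[OF ray_geo[OF r, of b] ab] ray_p[OF r, of b] ab by auto

lemma exp_small: "0 < e \<Longrightarrow> \<exists>N::nat. \<forall>k\<ge>N. exp (- \<epsilon> * real k) < e"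
proof -
  assume e: "0 < e"
  from exp_seq_zero[OF eps] e obtain N where "\<forall>k\<ge>N. dist (exp (- \<epsilon> * real k)) 0 < e"
    unfolding lim_sequentially by blast
  then show ?thesis by auto
qed

lemma ray_conv:
  assumes r: "geodesic_ray p \<gamma>"
  shows "convergent (\<lambda>k::nat. \<iota> (\<gamma> (real k)))"
proof -
  have "Cauchy (\<lambda>k::nat. \<iota> (\<gamma> (real k)))"
    unfolding Cauchy_def
  proof (intro allI impI)
    fix e :: real assume e: "0 < e"
    obtain N where N: "\<forall>k\<ge>N. exp (- \<epsilon> * real k) < e * \<epsilon>" using exp_small[of "e * \<epsilon>"] e eps by auto
    show "\<exists>M. \<forall>m\<ge>M. \<forall>n\<ge>M. dist (\<iota> (\<gamma> (real m))) (\<iota> (\<gamma> (real n))) < e"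
    proof (intro exI[of _ N] allI impI)
      fix m n :: nat assume mn: "N \<le> m" "N \<le> n"
      have *: "dist (\<iota> (\<gamma> (real m))) (\<iota> (\<gamma> (real n))) < e" if "N \<le> m" "m \<le> n" for m n :: nat
      proof -
        have "dist (\<iota> (\<gamma> (real m))) (\<iota> (\<gamma> (real n))) \<le> exp (- \<epsilon> * real m) / \<epsilon>"
          using ray_tail[OF r, of m n] that by auto
        also have "\<dots> < e" using N that eps by (simp add: divide_simps mult.commute)
        finally show ?thesis .
      qed
      show "dist (\<iota> (\<gamma> (real m))) (\<iota> (\<gamma> (real n))) < e"
      proof (cases "m \<le> n")
        case True then show ?thesis using * mn by auto
      next
        case False then show ?thesis using *[of n m] mn by (simp add: dist_commute)
      qed
    qed
  qed
  then show ?thesis by (simp add: Cauchy_convergent_iff)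
qed

lemma equiv_lim:
  assumes r1: "geodesic_ray p \<gamma>1" and r2: "geodesic_ray p \<gamma>2" and B: "\<forall>t\<ge>0. dist (\<gamma>1 t) (\<gamma>2 t) \<le> B"
  shows "(\<lambda>k::nat. dist (\<iota> (\<gamma>1 (real k))) (\<iota> (\<gamma>2 (real k)))) \<longlonglongrightarrow> 0"
proof (rule Lim_null_comparison)
  have B0: "0 \<le> B" using B[rule_format, of 0] by (meson zero_le_dist order_trans order_refl)
  show "eventually (\<lambda>k. norm (dist (\<iota> (\<gamma>1 (real k))) (\<iota> (\<gamma>2 (real k)))) \<le> (B * exp (\<epsilon> * B)) * exp (- \<epsilon> * real k)) sequentially"
  proof (rule always_eventually, rule allI)
    fix k :: nat
    define d where "d = dist (\<gamma>1 (real k)) (\<gamma>2 (real k))"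
    have d: "0 \<le> d" "d \<le> B" unfolding d_def using B by auto
    have "dist (\<iota> (\<gamma>1 (real k))) (\<iota> (\<gamma>2 (real k))) \<le> d * exp (- \<epsilon> * (real k - d))"
      using di_upper1[of "\<gamma>1 (real k)" "\<gamma>2 (real k)"] ray_p[OF r1, of k] unfolding d_def by simp
    also have "\<dots> \<le> B * exp (- \<epsilon> * (real k - B))"
      using d eps by (intro mult_mono) (auto simp: mult_left_mono)
    also have "\<dots> = (B * exp (\<epsilon> * B)) * exp (- \<epsilon> * real k)"
      by (simp add: algebra_simps flip: exp_add)
    finally show "norm (dist (\<iota> (\<gamma>1 (real k))) (\<iota> (\<gamma>2 (real k)))) \<le> (B * exp (\<epsilon> * B)) * exp (- \<epsilon> * real k)"
      by simp
  qed
  show "(\<lambda>k. (B * exp (\<epsilon> * B)) * exp (- \<epsilon> * real k)) \<longlonglongrightarrow> 0"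
    using tendsto_mult[OF tendsto_const exp_seq_zero[OF eps], of "B * exp (\<epsilon> * B)"] by simp
qed

lemma equiv_lim':
  assumes r1: "geodesic_ray p \<gamma>1" and r2: "geodesic_ray p \<gamma>2" and B: "\<forall>t\<ge>0. dist (\<gamma>1 t) (\<gamma>2 t) \<le> B"
    and l: "(\<lambda>k::nat. \<iota> (\<gamma>1 (real k))) \<longlonglongrightarrow> x"
  shows "(\<lambda>k::nat. \<iota> (\<gamma>2 (real k))) \<longlonglongrightarrow> x"
proof -
  have "(\<lambda>k::nat. dist (\<iota> (\<gamma>2 (real k))) (\<iota> (\<gamma>1 (real k)))) \<longlonglongrightarrow> 0"
    using equiv_lim[OF r1 r2 B] by (simp add: dist_commute)
  show ?thesis
    unfolding lim_sequentially
  proof (intro allI impI)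
    fix r :: real assume r: "0 < r"
    obtain N1 where N1: "\<forall>n\<ge>N1. dist (dist (\<iota> (\<gamma>2 (real n))) (\<iota> (\<gamma>1 (real n)))) 0 < r/2"
      using \<open>(\<lambda>k::nat. dist (\<iota> (\<gamma>2 (real k))) (\<iota> (\<gamma>1 (real k)))) \<longlonglongrightarrow> 0\<close> r
      unfolding lim_sequentially by (meson half_gt_zero)
    obtain N2 where N2: "\<forall>n\<ge>N2. dist (\<iota> (\<gamma>1 (real n))) x < r/2"
      using l r unfolding lim_sequentially by (meson half_gt_zero)
    show "\<exists>N. \<forall>n\<ge>N. dist (\<iota> (\<gamma>2 (real n))) x < r"
    proof (intro exI[of _ "max N1 N2"] allI impI)
      fix n assume "max N1 N2 \<le> n"
      then have "dist (\<iota> (\<gamma>2 (real n))) (\<iota> (\<gamma>1 (real n))) < r/2" "dist (\<iota> (\<gamma>1 (real n))) x < r/2"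
        using N1 N2 by auto
      then show "dist (\<iota> (\<gamma>2 (real n))) x < r"
        using dist_triangle[of "\<iota> (\<gamma>2 (real n))" x "\<iota> (\<gamma>1 (real n))"] by simp
    qed
  qed
qed

end


lemma req_equiv: "equiv {\<gamma>. geodesic_ray p \<gamma>} (ray_equiv p)"
proof (rule equivI)
  show "ray_equiv p \<subseteq> {\<gamma>. geodesic_ray p \<gamma>} \<times> {\<gamma>. geodesic_ray p \<gamma>}"
    unfolding ray_equiv_def by auto
  show "refl_on {\<gamma>. geodesic_ray p \<gamma>} (ray_equiv p)"
    unfolding ray_equiv_def by (rule refl_onI) auto
  show "sym (ray_equiv p)"
    unfolding ray_equiv_def by (rule symI) (auto simp: dist_commute)
  show "trans (ray_equiv p)"
  proof (rule transI)
    fix x y z assume "(x, y) \<in> ray_equiv p" "(y, z) \<in> ray_equiv p"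
    then obtain B1 B2 where "geodesic_ray p x" "geodesic_ray p z"
      "\<forall>t\<ge>0. dist (x t) (y t) \<le> B1" "\<forall>t\<ge>0. dist (y t) (z t) \<le> B2"
      unfolding ray_equiv_def by auto
    note H = this
    have "\<forall>t\<ge>0. dist (x t) (z t) \<le> B1 + B2"
    proof (intro allI impI)
      fix t :: real assume "0 \<le> t"
      then have "dist (x t) (y t) \<le> B1" "dist (y t) (z t) \<le> B2" using H by auto
      then show "dist (x t) (z t) \<le> B1 + B2" using dist_triangle[of "x t" "z t" "y t"] by linarith
    qed
    then show "(x, z) \<in> ray_equiv p" unfolding ray_equiv_def using H by blast
  qed
qed

context unif_setting
begin

lemma H2:
  assumes geo: "geodesic_seg g x y"
  shows "\<exists>s0\<in>{0..dist x y}. dist p (g s0) \<le> gromov_prod p x y + 2 * \<delta>"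
proof -
  define s0 where "s0 = gromov_prod x p y"
  have s0: "s0 \<in> {0..dist x y}" unfolding s0_def gromov_prod_def
    using dist_triangle[of x y p] dist_triangle[of p y x] dist_triangle[of p x y] by (auto simp: dist_commute)
  have g0: "g 0 = x" and gD: "g (dist x y) = y" using geo unfolding geodesic_seg_def by auto
  have dxz: "dist x (g s0) = s0" using geodesic_dist[OF geo, of 0 s0] s0 g0 by auto
  have dzy: "dist (g s0) y = dist x y - s0" using geodesic_dist[OF geo, of s0 "dist x y"] s0 gD by auto
  have h: "gromov_prod x p (g s0) \<ge> min (gromov_prod x p y) (gromov_prod x y (g s0)) - \<delta>"
    by (rule hyp4)
  have "gromov_prod x y (g s0) = s0" unfolding gromov_prod_def using dxz dzy by (simp add: dist_commute)
  then have "gromov_prod x p (g s0) \<ge> s0 - \<delta>" using h unfolding s0_def by simp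
  then have "dist p (g s0) \<le> gromov_prod p x y + 2 * \<delta>"
    using dxz unfolding gromov_prod_def s0_def by (simp add: dist_commute field_simps)
  then show ?thesis using s0 by blast
qed

lemma H3:
  assumes r1: "geodesic_ray p \<gamma>1" and r2: "geodesic_ray p \<gamma>2" and ts: "0 \<le> t" "t \<le> s"
    and pr: "t \<le> gromov_prod p (\<gamma>1 s) (\<gamma>2 s)"
  shows "dist (\<gamma>1 t) (\<gamma>2 t) \<le> 4 * \<delta>"
proof -
  have 1: "gromov_prod p (\<gamma>1 t) (\<gamma>1 s) = t" unfolding gromov_prod_def
    using ray_p[OF r1, of t] ray_p[OF r1, of s] ray_dist[OF r1, of t s] ts by simp
  have 2: "gromov_prod p (\<gamma>2 s) (\<gamma>2 t) = t" unfolding gromov_prod_def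
    using ray_p[OF r2, of t] ray_p[OF r2, of s] ray_dist[OF r2, of s t] ts by simp
  have a: "gromov_prod p (\<gamma>1 t) (\<gamma>2 s) \<ge> t - \<delta>"
    using hyp4[of p "\<gamma>1 t" "\<gamma>1 s" "\<gamma>2 s"] 1 pr by linarith
  have b: "gromov_prod p (\<gamma>1 t) (\<gamma>2 t) \<ge> t - 2 * \<delta>"
    using hyp4[of p "\<gamma>1 t" "\<gamma>2 s" "\<gamma>2 t"] 2 a delta_nonneg by linarith
  then show ?thesis unfolding gromov_prod_def using ray_p[OF r1, of t] ray_p[OF r2, of t] ts by simp
qed

lemma Phi_lim:
  assumes C: "C \<in> gromov_boundary p" and g: "\<gamma> \<in> C"
  shows "geodesic_ray p \<gamma>" "(\<lambda>k::nat. \<iota> (\<gamma> (real k))) \<longlonglongrightarrow> Phi_map \<iota> C"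
proof -
  define \<gamma>0 where "\<gamma>0 = (SOME \<gamma>. \<gamma> \<in> C)"
  have g0: "\<gamma>0 \<in> C" unfolding \<gamma>0_def using g by (rule someI[where P="\<lambda>\<gamma>. \<gamma> \<in> C"])
  have "(\<gamma>0, \<gamma>) \<in> ray_equiv p"
    using in_quotient_imp_in_rel[OF req_equiv C[unfolded gromov_boundary_def], of \<gamma>0 \<gamma>] g g0 by auto
  then obtain B where r0: "geodesic_ray p \<gamma>0" and r: "geodesic_ray p \<gamma>"
    and B: "\<forall>t\<ge>0. dist (\<gamma>0 t) (\<gamma> t) \<le> B"
    unfolding ray_equiv_def by auto
  show "geodesic_ray p \<gamma>" by (rule r)
  have "(\<lambda>k::nat. \<iota> (\<gamma>0 (real k))) \<longlonglongrightarrow> Phi_map \<iota> C"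
    using ray_conv[OF r0] unfolding Phi_map_def \<gamma>0_def[symmetric] by (simp add: convergent_LIMSEQ_iff)
  then show "(\<lambda>k::nat. \<iota> (\<gamma> (real k))) \<longlonglongrightarrow> Phi_map \<iota> C" by (rule equiv_lim'[OF r0 r B])
qed

lemma Phi_bdry:
  assumes r: "geodesic_ray p \<gamma>" and l: "(\<lambda>k::nat. \<iota> (\<gamma> (real k))) \<longlonglongrightarrow> x"
  shows "x \<in> metric_boundary \<iota>"
proof -
  have "x \<in> closure (range \<iota>)"
    unfolding closure_sequential using l by (intro exI[of _ "\<lambda>k. \<iota> (\<gamma> (real k))"]) auto
  moreover have "x \<notin> range \<iota>"
  proof
    assume "x \<in> range \<iota>"
    then obtain y where y: "x = \<iota> y" by auto
    define c where "c = exp (- \<epsilon> * (dist p y + 1))"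
    have c: "0 < c" unfolding c_def by simp
    obtain N where N: "\<forall>k\<ge>N. dist (\<iota> (\<gamma> (real k))) x < c"
      using l c unfolding lim_sequentially by blast
    define k where "k = max N (nat \<lceil>dist p y + 1\<rceil>)"
    have k: "dist p y + 1 \<le> real k" unfolding k_def by linarith
    have "real k = dist p (\<gamma> (real k))" using ray_p[OF r, of k] by simp
    also have "\<dots> \<le> dist p y + dist y (\<gamma> (real k))" by (rule dist_triangle)
    finally have "1 \<le> dist y (\<gamma> (real k))" using k by simp
    then have "c \<le> dist (\<iota> y) (\<iota> (\<gamma> (real k)))" using di_lower[of 1 y "\<gamma> (real k)"] unfolding c_def by simp
    moreover have "dist (\<iota> (\<gamma> (real k))) x < c" using N unfolding k_def by simp
    ultimately show False using y by (simp add: dist_commute)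
  qed
  ultimately show ?thesis unfolding metric_boundary_def by blast
qed

end


context unif_setting
begin

lemma surj_ray:
  assumes x: "x \<in> metric_boundary \<iota>"
  shows "\<exists>\<gamma>. geodesic_ray p \<gamma> \<and> (\<lambda>k::nat. \<iota> (\<gamma> (real k))) \<longlonglongrightarrow> x"
proof -
  have xcl: "x \<in> closure (range \<iota>)" and xnr: "x \<notin> range \<iota>"
    using x unfolding metric_boundary_def by auto
  obtain xs where xs: "\<forall>n. xs n \<in> range \<iota>" "xs \<longlonglongrightarrow> x"
    using xcl unfolding closure_sequential by blast
  then have "\<forall>n. \<exists>b. xs n = \<iota> b" by auto
  then obtain a where a: "\<And>n. xs n = \<iota> (a n)" by metis
  have lim: "(\<lambda>n. \<iota> (a n)) \<longlonglongrightarrow> x" proof -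
    have "xs = (\<lambda>n. \<iota> (a n))" using a by auto
    then show ?thesis using xs(2) by simp
  qed
  have far: "eventually (\<lambda>n. M < dist p (a n)) sequentially" for M
  proof (rule ccontr)
    assume "\<not> ?thesis"
    then have "frequently (\<lambda>n. a n \<in> cball p M) sequentially"
      unfolding not_eventually by (simp add: not_less)
    then obtain y where y: "\<forall>U. open U \<longrightarrow> y \<in> U \<longrightarrow> frequently (\<lambda>n. a n \<in> U) sequentially"
      using cluster_frequently[OF proper] by blast
    define K where "K = 1 + exp (- \<epsilon> * (dist p y - 1))"
    have K: "0 < K" unfolding K_def by (simp add: add_pos_pos)
    have bnd: "dist (\<iota> y) x \<le> \<eta> * K" if eta: "0 < \<eta>" "\<eta> \<le> 1" for \<eta>
    proof -
      have "frequently (\<lambda>n. a n \<in> ball y \<eta>) sequentially" using y[rule_format, of "ball y \<eta>"] eta by simp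
      moreover have "eventually (\<lambda>n. dist (\<iota> (a n)) x < \<eta>) sequentially"
        using tendstoD[OF lim] eta by blast
      ultimately have "frequently (\<lambda>n. a n \<in> ball y \<eta> \<and> dist (\<iota> (a n)) x < \<eta>) sequentially"
        by (rule frequently_eventually_frequently)
      then obtain n where n: "dist y (a n) < \<eta>" "dist (\<iota> (a n)) x < \<eta>"
        by (auto dest: frequently_ex)
      define d where "d = dist y (a n)"
      have d: "0 \<le> d" "d \<le> \<eta>" "d \<le> 1" using n eta unfolding d_def by auto
      have "dist (\<iota> y) (\<iota> (a n)) \<le> d * exp (- \<epsilon> * (dist p y - d))"
        using di_upper1[of y "a n"] unfolding d_def by simp
      also have "\<dots> \<le> \<eta> * exp (- \<epsilon> * (dist p y - 1))"
        using d eps by (intro mult_mono) (auto simp: mult_left_mono)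
      finally have "dist (\<iota> y) (\<iota> (a n)) \<le> \<eta> * exp (- \<epsilon> * (dist p y - 1))" .
      then have "dist (\<iota> y) x \<le> \<eta> * exp (- \<epsilon> * (dist p y - 1)) + \<eta>"
        using dist_triangle[of "\<iota> y" x "\<iota> (a n)"] n by linarith
      then show ?thesis unfolding K_def by (simp add: algebra_simps)
    qed
    have "dist (\<iota> y) x \<le> 0"
    proof (rule field_le_epsilon)
      fix e :: real assume e: "0 < e"
      have "dist (\<iota> y) x \<le> min 1 (e / K) * K" using bnd[of "min 1 (e / K)"] e K by simp
      also have "\<dots> \<le> e" using K e by (simp add: min_def field_simps)
      finally show "dist (\<iota> y) x \<le> 0 + e" by simp
    qed
    then have "x = \<iota> y" by simp
    then show False using xnr by auto
  qed
  text \<open>Step c: geodesics and a cluster point in the product topology.\<close>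
  define g where "g = (\<lambda>n. SOME g. geodesic_seg g p (a n))"
  have g: "geodesic_seg (g n) p (a n)" for n
    unfolding g_def using geo_ex[of p "a n"] by (rule someI_ex)
  define \<sigma> where "\<sigma> = (\<lambda>n t. g n (max 0 (min t (dist p (a n)))))"
  have \<sigma>eq: "\<sigma> n t = g n t" if "0 \<le> t" "t \<le> dist p (a n)" for n t
    unfolding \<sigma>_def using that by simp
  define KK where "KK = PiE UNIV (\<lambda>t::real. cball p \<bar>t\<bar>)"
  have \<sigma>K: "\<sigma> n \<in> KK" for n
  proof -
    have "dist p (\<sigma> n t) \<le> \<bar>t\<bar>" for t
      unfolding \<sigma>_def using geo_from_p[OF g, of "max 0 (min t (dist p (a n)))" n] by auto
    then show ?thesis unfolding KK_def by (simp add: PiE_iff)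
  qed
  have cKK: "compact KK"
  proof -
    have "compactin (product_topology (\<lambda>_. euclidean) UNIV) KK"
      unfolding KK_def compactin_PiE by (simp add: compactin_euclidean_iff proper)
    then show ?thesis by (simp add: euclidean_product_topology compactin_euclidean_iff)
  qed
  have "frequently (\<lambda>n. \<sigma> n \<in> KK) sequentially"
  proof (rule eventually_frequently)
    show "eventually (\<lambda>n. \<sigma> n \<in> KK) sequentially" using \<sigma>K by (intro always_eventually) blast
  qed simp
  from cluster_frequently[OF cKK this] obtain \<gamma> where \<gamma>K: "\<gamma> \<in> KK"
    and cl: "\<forall>U. open U \<longrightarrow> \<gamma> \<in> U \<longrightarrow> frequently (\<lambda>n. \<sigma> n \<in> U) sequentially"
    by (elim bexE)
  have pair: "frequently (\<lambda>n. dist (\<sigma> n s) (\<gamma> s) < \<eta> \<and> dist (\<sigma> n t) (\<gamma> t) < \<eta>) sequentially"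
    if "0 < \<eta>" for s t \<eta>
  proof -
    have "open ({f. dist (f s) (\<gamma> s) < \<eta>} \<inter> {f. dist (f t) (\<gamma> t) < \<eta>})"
      by (intro open_Int open_coord)
    then show ?thesis using cl that by auto
  qed
  have "\<gamma> 0 \<in> cball p \<bar>0\<bar>" using PiE_mem[OF \<gamma>K[unfolded KK_def], of 0] by simp
  then have \<gamma>0: "\<gamma> 0 = p" by simp
  have iso\<gamma>: "dist (\<gamma> s) (\<gamma> t) = \<bar>s - t\<bar>" if st: "0 \<le> s" "0 \<le> t" for s t
  proof -
    have close: "\<bar>dist (\<gamma> s) (\<gamma> t) - \<bar>s - t\<bar>\<bar> \<le> e" if e: "0 < e" for e
    proof -
      have "frequently (\<lambda>n. (dist (\<sigma> n s) (\<gamma> s) < e/2 \<and> dist (\<sigma> n t) (\<gamma> t) < e/2)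
          \<and> max s t < dist p (a n)) sequentially"
        using frequently_eventually_frequently[OF pair[of "e/2" s t] far[of "max s t"]] e by simp
      then obtain n where n: "dist (\<sigma> n s) (\<gamma> s) < e/2" "dist (\<sigma> n t) (\<gamma> t) < e/2" "max s t < dist p (a n)"
        by (auto dest: frequently_ex)
      have "dist (\<sigma> n s) (\<sigma> n t) = \<bar>s - t\<bar>"
        using \<sigma>eq[of s n] \<sigma>eq[of t n] st n(3) geodesic_dist[OF g, of s n t] by auto
      moreover have "dist (\<gamma> s) (\<gamma> t) \<le> dist (\<gamma> s) (\<sigma> n s) + dist (\<sigma> n s) (\<gamma> t)"
        by (rule dist_triangle)
      moreover have "dist (\<sigma> n s) (\<gamma> t) \<le> dist (\<sigma> n s) (\<sigma> n t) + dist (\<sigma> n t) (\<gamma> t)"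
        by (rule dist_triangle)
      moreover have "dist (\<sigma> n s) (\<sigma> n t) \<le> dist (\<sigma> n s) (\<gamma> s) + dist (\<gamma> s) (\<sigma> n t)"
        by (rule dist_triangle)
      moreover have "dist (\<gamma> s) (\<sigma> n t) \<le> dist (\<gamma> s) (\<gamma> t) + dist (\<gamma> t) (\<sigma> n t)"
        by (rule dist_triangle)
      moreover have "dist (\<gamma> s) (\<sigma> n s) = dist (\<sigma> n s) (\<gamma> s)" "dist (\<gamma> t) (\<sigma> n t) = dist (\<sigma> n t) (\<gamma> t)"
        by (simp_all add: dist_commute)
      ultimately show ?thesis using n(1,2) by (simp only: abs_le_iff) linarith
    qed
    have "dist (\<gamma> s) (\<gamma> t) \<le> \<bar>s - t\<bar>"
    proof (rule field_le_epsilon)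
      fix e :: real assume "0 < e" then show "dist (\<gamma> s) (\<gamma> t) \<le> \<bar>s - t\<bar> + e"
        using close[OF \<open>0 < e\<close>] by (simp add: abs_le_iff)
    qed
    moreover have "\<bar>s - t\<bar> \<le> dist (\<gamma> s) (\<gamma> t)"
    proof (rule field_le_epsilon)
      fix e :: real assume "0 < e" then show "\<bar>s - t\<bar> \<le> dist (\<gamma> s) (\<gamma> t) + e"
        using close[OF \<open>0 < e\<close>] unfolding abs_le_iff[of "dist (\<gamma> s) (\<gamma> t) - \<bar>s - t\<bar>"] by linarith
    qed
    ultimately show ?thesis by simp
  qed
  have ray: "geodesic_ray p \<gamma>" unfolding geodesic_ray_def using \<gamma>0 iso\<gamma> by auto
  have "(\<lambda>k::nat. \<iota> (\<gamma> (real k))) \<longlonglongrightarrow> x"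
    unfolding lim_sequentially
  proof (intro allI impI)
    fix r :: real assume r: "0 < r"
    define A where "A = exp \<epsilon> + 1 / \<epsilon>"
    have A: "0 < A" unfolding A_def using eps by (simp add: add_pos_pos)
    obtain N where N: "\<forall>k\<ge>N. exp (- \<epsilon> * real k) < (r/2) / A"
      using exp_small[of "(r/2) / A"] r A by auto
    show "\<exists>N. \<forall>k\<ge>N. dist (\<iota> (\<gamma> (real k))) x < r"
    proof (intro exI[of _ N] allI impI)
      fix k :: nat assume k: "N \<le> k"
      have ev: "eventually (\<lambda>n. dist (\<iota> (a n)) x < r/2 \<and> real k < dist p (a n)) sequentially"
        using tendstoD[OF lim, of "r/2"] r far[of "real k"] by (auto intro: eventually_conj)
      have "frequently (\<lambda>n. (dist (\<sigma> n (real k)) (\<gamma> (real k)) < 1 \<and> dist (\<sigma> n (real k)) (\<gamma> (real k)) < 1)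
          \<and> (dist (\<iota> (a n)) x < r/2 \<and> real k < dist p (a n))) sequentially"
        using frequently_eventually_frequently[OF pair[of 1 "real k" "real k"] ev] by simp
      then obtain n where n: "dist (\<sigma> n (real k)) (\<gamma> (real k)) < 1" "dist (\<iota> (a n)) x < r/2"
        "real k < dist p (a n)"
        by (auto dest: frequently_ex)
      define d where "d = dist (\<gamma> (real k)) (\<sigma> n (real k))"
      have d: "0 \<le> d" "d \<le> 1" using n unfolding d_def by (auto simp: dist_commute)
      have "dist (\<iota> (\<gamma> (real k))) (\<iota> (\<sigma> n (real k))) \<le> d * exp (- \<epsilon> * (real k - d))"
        using di_upper1[of "\<gamma> (real k)" "\<sigma> n (real k)"] ray_p[OF ray, of k] unfolding d_def by simp
      also have "\<dots> \<le> 1 * exp (- \<epsilon> * (real k - 1))"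
        using d eps by (intro mult_mono) (auto simp: mult_left_mono)
      also have "\<dots> = exp \<epsilon> * exp (- \<epsilon> * real k)" by (simp add: algebra_simps flip: exp_add)
      finally have 1: "dist (\<iota> (\<gamma> (real k))) (\<iota> (\<sigma> n (real k))) \<le> exp \<epsilon> * exp (- \<epsilon> * real k)" .
      have gL: "g n (dist p (a n)) = a n" using g[of n] unfolding geodesic_seg_def by simp
      have "dist (\<iota> (\<sigma> n (real k))) (\<iota> (a n)) \<le> exp (- \<epsilon> * real k) / \<epsilon>"
        using di_tail[OF g[of n], of "real k" "dist p (a n)"] \<sigma>eq[of "real k" n] n(3) gL by simp
      then have 2: "dist (\<iota> (\<sigma> n (real k))) (\<iota> (a n)) \<le> (1/\<epsilon>) * exp (- \<epsilon> * real k)" by simp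
      have "dist (\<iota> (\<gamma> (real k))) x \<le> A * exp (- \<epsilon> * real k) + dist (\<iota> (a n)) x"
        using 1 2 dist_triangle[of "\<iota> (\<gamma> (real k))" x "\<iota> (\<sigma> n (real k))"]
          dist_triangle[of "\<iota> (\<sigma> n (real k))" x "\<iota> (a n)"] unfolding A_def by (simp add: algebra_simps)
      also have "A * exp (- \<epsilon> * real k) < r/2" using N k A by (simp add: field_simps)
      finally show "dist (\<iota> (\<gamma> (real k))) x < r" using n(2) by simp
    qed
  qed
  then show ?thesis using ray by blast
qed

end


context unif_setting
begin

lemma inj_rays:
  assumes GH: "GH_property \<epsilon> p \<iota>" and r1: "geodesic_ray p \<gamma>1" and r2: "geodesic_ray p \<gamma>2"
    and l1: "(\<lambda>k::nat. \<iota> (\<gamma>1 (real k))) \<longlonglongrightarrow> x" and l2: "(\<lambda>k::nat. \<iota> (\<gamma>2 (real k))) \<longlonglongrightarrow> x"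
  shows "\<exists>B. \<forall>t\<ge>0. dist (\<gamma>1 t) (\<gamma>2 t) \<le> B"
proof (rule ccontr)
  assume nb: "\<not> ?thesis"
  then obtain t0 where t0: "0 \<le> t0" "4 * \<delta> < dist (\<gamma>1 t0) (\<gamma>2 t0)"
    by (meson not_le)
  have prod: "gromov_prod p (\<gamma>1 s) (\<gamma>2 s) < t0" if "t0 \<le> s" for s
  proof (rule ccontr)
    assume "\<not> gromov_prod p (\<gamma>1 s) (\<gamma>2 s) < t0"
    then have "dist (\<gamma>1 t0) (\<gamma>2 t0) \<le> 4 * \<delta>" using H3[OF r1 r2 t0(1) that] by simp
    then show False using t0(2) by simp
  qed
  have xb: "x \<in> metric_boundary \<iota>" by (rule Phi_bdry[OF r1 l1])
  define xs where "xs = (\<lambda>n::nat. if even n then \<gamma>1 (real (n div 2)) else \<gamma>2 (real (n div 2)))"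
  have lx: "(\<lambda>n. \<iota> (xs n)) \<longlonglongrightarrow> x"
    unfolding lim_sequentially
  proof (intro allI impI)
    fix r :: real assume r: "0 < r"
    obtain N1 where N1: "\<forall>n\<ge>N1. dist (\<iota> (\<gamma>1 (real n))) x < r" using l1 r unfolding lim_sequentially by blast
    obtain N2 where N2: "\<forall>n\<ge>N2. dist (\<iota> (\<gamma>2 (real n))) x < r" using l2 r unfolding lim_sequentially by blast
    show "\<exists>N. \<forall>n\<ge>N. dist (\<iota> (xs n)) x < r"
    proof (intro exI[of _ "2 * max N1 N2"] allI impI)
      fix n assume "2 * max N1 N2 \<le> n"
      then have "N1 \<le> n div 2" "N2 \<le> n div 2" by auto
      then show "dist (\<iota> (xs n)) x < r" unfolding xs_def using N1 N2 by auto
    qed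
  qed
  from GH xb lx obtain C where C1: "C \<ge> 1" and C: "\<And>n m g. geodesic_seg g (xs n) (xs m) \<Longrightarrow>
      length_wrt (unif_dist \<epsilon> p) g 0 (dist (xs n) (xs m)) \<le> ereal (C * unif_dist \<epsilon> p (xs n) (xs m))"
    unfolding GH_property_def by blast
  define c where "c = exp (- \<epsilon> * (t0 + 2 * \<delta> + 2))"
  have c: "0 < c" unfolding c_def by simp
  have dlim: "(\<lambda>k::nat. dist (\<iota> (\<gamma>1 (real k))) (\<iota> (\<gamma>2 (real k)))) \<longlonglongrightarrow> 0"
    using tendsto_dist[OF l1 l2] by simp
  obtain N where N: "\<forall>k\<ge>N. dist (dist (\<iota> (\<gamma>1 (real k))) (\<iota> (\<gamma>2 (real k)))) 0 < c / C"
    using dlim c C1 unfolding lim_sequentially by (meson divide_pos_pos less_le_trans zero_less_one)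
  define k where "k = max N (nat \<lceil>t0\<rceil> + 1)"
  have kt: "t0 + 1 \<le> real k" unfolding k_def by linarith
  have small: "dist (\<iota> (\<gamma>1 (real k))) (\<iota> (\<gamma>2 (real k))) < c / C" using N unfolding k_def by simp
  have x1: "xs (2 * k) = \<gamma>1 (real k)" and x2: "xs (2 * k + 1) = \<gamma>2 (real k)" unfolding xs_def by auto
  obtain g where geo: "geodesic_seg g (\<gamma>1 (real k)) (\<gamma>2 (real k))" using geo_ex by blast
  obtain s0 where s0: "s0 \<in> {0..dist (\<gamma>1 (real k)) (\<gamma>2 (real k))}"
    "dist p (g s0) \<le> gromov_prod p (\<gamma>1 (real k)) (\<gamma>2 (real k)) + 2 * \<delta>"
    using H2[OF geo] by blast
  have pk: "gromov_prod p (\<gamma>1 (real k)) (\<gamma>2 (real k)) < t0" using prod kt by simp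
  define D where "D = dist (\<gamma>1 (real k)) (\<gamma>2 (real k))"
  have "gromov_prod p (\<gamma>1 (real k)) (\<gamma>2 (real k)) = (2 * real k - D) / 2"
    unfolding gromov_prod_def D_def using ray_p[OF r1, of k] ray_p[OF r2, of k] by simp
  then have D2: "2 \<le> D" using pk kt by simp
  define a where "a = min s0 (D - 1)"
  have a: "0 \<le> a" "a \<le> s0" "s0 - a \<le> 1" "a + 1 \<le> D" using s0 D2 unfolding a_def D_def by auto
  have dab: "dist (g a) (g (a + 1)) = 1" using geodesic_dist[OF geo, of a "a + 1"] a unfolding D_def by auto
  have das: "dist (g s0) (g a) = s0 - a" using geodesic_dist[OF geo, of s0 a] a s0 unfolding D_def by auto
  have "dist p (g a) \<le> dist p (g s0) + dist (g s0) (g a)" by (rule dist_triangle)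
  then have pa: "dist p (g a) + 1 \<le> t0 + 2 * \<delta> + 2" using s0(2) pk das a by linarith
  have "c \<le> exp (- \<epsilon> * (dist p (g a) + 1))" unfolding c_def using pa eps by (simp add: mult_left_mono)
  also have "\<dots> = exp (- \<epsilon> * (dist p (g a) + 1)) * min 1 (dist (g a) (g (a + 1)))" using dab by simp
  also have "\<dots> \<le> dist (\<iota> (g a)) (\<iota> (g (a + 1)))" by (rule di_lower) simp
  also have "\<dots> = unif_dist \<epsilon> p (g a) (g (a + 1))" by (rule di)
  finally have lo: "c \<le> unif_dist \<epsilon> p (g a) (g (a + 1))" .
  have "ereal (unif_dist \<epsilon> p (g a) (g (a + 1))) \<le> length_wrt (unif_dist \<epsilon> p) g 0 D"
    by (rule length_wrt_ge_pair) (use a in auto)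
  also have "\<dots> \<le> ereal (C * unif_dist \<epsilon> p (\<gamma>1 (real k)) (\<gamma>2 (real k)))"
    using C[of g "2 * k" "2 * k + 1"] geo unfolding x1 x2 D_def by simp
  finally have "unif_dist \<epsilon> p (g a) (g (a + 1)) \<le> C * unif_dist \<epsilon> p (\<gamma>1 (real k)) (\<gamma>2 (real k))" by simp
  also have "\<dots> = C * dist (\<iota> (\<gamma>1 (real k))) (\<iota> (\<gamma>2 (real k)))" using di by simp
  also have "\<dots> < C * (c / C)" using small C1 by (intro mult_strict_left_mono) auto
  also have "\<dots> = c" using C1 by simp
  finally show False using lo by simp
qed

end

theorem lemma3p2:
  fixes p :: "'a::metric_space" and \<delta> \<epsilon> :: real and \<iota> :: "'a \<Rightarrow> 'b::complete_space"
  assumes "gromov_hyperbolic TYPE('a) \<delta>"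
    and "\<epsilon> > 0"
    and "\<forall>x y. dist (\<iota> x) (\<iota> y) = unif_dist \<epsilon> p x y"
    and "GH_property \<epsilon> p \<iota>"
  shows "bij_betw (Phi_map \<iota>) (gromov_boundary p) (metric_boundary \<iota>)"
proof -
  interpret unif_setting p \<delta> \<epsilon> \<iota> using assms(1-3) by unfold_locales
  have EQ: "equiv {\<gamma>. geodesic_ray p \<gamma>} (ray_equiv p)" by (rule req_equiv)
  have rep: "\<exists>\<gamma>. \<gamma> \<in> C" if "C \<in> gromov_boundary p" for C
  proof -
    from that obtain \<gamma> where "C = ray_equiv p `` {\<gamma>}" "\<gamma> \<in> {\<gamma>. geodesic_ray p \<gamma>}"
      unfolding gromov_boundary_def by (rule quotientE)
    then show ?thesis using equiv_class_self[OF EQ] by blast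
  qed
  show ?thesis
    unfolding bij_betw_def
  proof (intro conjI)
    show "inj_on (Phi_map \<iota>) (gromov_boundary p)"
    proof (rule inj_onI)
      fix C1 C2 assume C1: "C1 \<in> gromov_boundary p" and C2: "C2 \<in> gromov_boundary p"
        and eq: "Phi_map \<iota> C1 = Phi_map \<iota> C2"
      obtain \<gamma>1 where g1: "\<gamma>1 \<in> C1" using rep[OF C1] by blast
      obtain \<gamma>2 where g2: "\<gamma>2 \<in> C2" using rep[OF C2] by blast
      have r1: "geodesic_ray p \<gamma>1" and l1: "(\<lambda>k::nat. \<iota> (\<gamma>1 (real k))) \<longlonglongrightarrow> Phi_map \<iota> C1"
        using Phi_lim[OF C1 g1] by auto
      have r2: "geodesic_ray p \<gamma>2" and l2: "(\<lambda>k::nat. \<iota> (\<gamma>2 (real k))) \<longlonglongrightarrow> Phi_map \<iota> C1"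
        using Phi_lim[OF C2 g2] eq by auto
      obtain B where "\<forall>t\<ge>0. dist (\<gamma>1 t) (\<gamma>2 t) \<le> B" using inj_rays[OF assms(4) r1 r2 l1 l2] by blast
      then have "(\<gamma>1, \<gamma>2) \<in> ray_equiv p" unfolding ray_equiv_def using r1 r2 by blast
      then show "C1 = C2"
        using quotient_eq_iff[OF EQ C1[unfolded gromov_boundary_def] C2[unfolded gromov_boundary_def] g1 g2] by simp
    qed
    show "Phi_map \<iota> ` gromov_boundary p = metric_boundary \<iota>"
    proof
      show "Phi_map \<iota> ` gromov_boundary p \<subseteq> metric_boundary \<iota>"
      proof
        fix y assume "y \<in> Phi_map \<iota> ` gromov_boundary p"
        then obtain C where C: "C \<in> gromov_boundary p" and y: "y = Phi_map \<iota> C" by blast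
        obtain \<gamma> where "\<gamma> \<in> C" using rep[OF C] by blast
        then show "y \<in> metric_boundary \<iota>" using Phi_lim[OF C] Phi_bdry y by blast
      qed
      show "metric_boundary \<iota> \<subseteq> Phi_map \<iota> ` gromov_boundary p"
      proof
        fix x assume "x \<in> metric_boundary \<iota>"
        then obtain \<gamma> where r: "geodesic_ray p \<gamma>" and l: "(\<lambda>k::nat. \<iota> (\<gamma> (real k))) \<longlonglongrightarrow> x"
          using surj_ray by blast
        define C where "C = ray_equiv p `` {\<gamma>}"
        have C: "C \<in> gromov_boundary p" unfolding C_def gromov_boundary_def by (rule quotientI) (use r in simp)
        have "\<gamma> \<in> C" unfolding C_def by (rule equiv_class_self[OF EQ]) (use r in simp)
        then have "(\<lambda>k::nat. \<iota> (\<gamma> (real k))) \<longlonglongrightarrow> Phi_map \<iota> C" using Phi_lim[OF C] by blast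
        then have "Phi_map \<iota> C = x" using l by (rule LIMSEQ_unique)
        then show "x \<in> Phi_map \<iota> ` gromov_boundary p" using C by blast
      qed
    qed
  qed
qed


end
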